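(* Let $\underline{\mathbb{G}}=(\mathbb{G},\mathcal{V},\omega_{\mathcal{V}},\mathcal{F},\omega_{\mathcal{F}})$ be a packaged ribbon graph and $\Gamma$ a finite group whose irreducible representations have dimensions $n_1,\dots,n_k$. (1) For any edge $e$ of $\mathbb{G}$, \[q_\Gamma(\underline{\mathbb{G}}_\mathcal{V})=|\Gamma|^{2-\mu(e)}q_\Gamma((\underline{\mathbb{G}}/e)_\mathcal{V})-q_\Gamma((\underline{\mathbb{G}}\backslash e)_\mathcal{V}),\] and if $\mathbb{G}$ has no edges then $q_\Gamma(\underline{\mathbb{G}}_\mathcal{V})=\prod_{[v]\in\mathcal{V}}|\Gamma|^{-1}\sum_{i}n_i^{1+|[v]|-\omega_{\mathcal{V}}([v])}$. (2) For any edge $e$ of $\mathbb{G}$, \[p_\Gamma(\underline{\mathbb{G}}_\mathcal{F})=|\Gamma|^{2-\eta(e)}p_\Gamma((\underline{\mathbb{G}}\backslash e)_\mathcal{F})-p_\Gamma((\underline{\mathbb{G}}/e)_\mathcal{F}),\] and if $\mathbb{G}$ has no edges then $p_\Gamma(\underline{\mathbb{G}}_\mathcal{F})=\prod_{[f]\in\mathcal{F}}|\Gamma|^{-1}\sum_{i}n_i^{1+|[f]|-\omega_{\mathcal{F}}([f])}$. Here $|[a]|$ is the number of elements of the block $[a]$.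
   Context: All ribbon graphs are orientable. A ribbon graph $\mathbb{G}=(V,E)$ is an orientable surface with boundary formed as a union of discs $V$ (vertices) and discs $E$ (edges) meeting in disjoint arcs, each arc on the boundary of exactly one vertex and one edge, each edge containing two arcs; $v,e,f$ count vertices, edges, boundary components. $\mathbb{G}\backslash e$ removes $e$; $\mathbb{G}|A$ is the spanning ribbon subgraph on $A\subseteq E$, $A^c=E\setminus A$; $\mathbb{G}/e$ is obtained by attaching discs (new vertices) to the boundary curves of $e\cup u\cup v$ ($u,v$ ends of $e$) and removing $e,u,v$; $\mathbb{G}/A$ contracts all edges of $A$; boundary components of contractions correspond naturally to those of $\mathbb{G}$. The dual $\mathbb{G}^*$ has as vertices discs capping the boundary components of $\mathbb{G}$, same edges. A packaged ribbon graph $\underline{\mathbb{G}}=(\mathbb{G},\mathcal{V},\omega_{\mathcal{V}},\mathcal{F},\omega_{\mathcal{F}})$: $\mathcal{V}$ a partition of the vertex set, $\mathcal{F}$ a partition of the set of boundary components (equivalently of vertices of $\mathbb{G}^*$), weightings $\omega_{\mathcal{V}}:\mathcal{V}\to\mathbb{N}_0$, $\omega_{\mathcal{F}}:\mathcal{F}\to\mathbb{N}_0$; totals $\omega_{\mathcal{V}}(\mathbb{G}),\omega_{\mathcal{F}}(\mathbb{G})$. $\underline{\mathbb{G}}_\mathcal{V}=(\mathbb{G},\mathcal{V},\omega_{\mathcal{V}})$, $\underline{\mathbb{G}}_\mathcal{F}=(\mathbb{G},\mathcal{F},\omega_{\mathcal{F}})$. $\eta(e)$ is the number of blocks of $\mathcal{F}$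 containing a boundary component meeting $e$; $\mu(e)$ is the number of blocks of $\mathcal{V}$ containing an end of $e$. Deletion $\underline{\mathbb{G}}\backslash e$: ribbon graph $\mathbb{G}\backslash e$, $\mathcal{V},\omega_{\mathcal{V}}$ unchanged. (i) If $e$ meets one boundary component $f$, deletion creates $f',g'$ replacing $f$; $[f]$ becomes $([f]\setminus\{f\})\cup\{f',g'\}$ with weight $+1$. (ii) If $e$ meets $f\ne g$ with $[f]=[g]$, deletion creates $f'$; block becomes $([f]\setminus\{f,g\})\cup\{f'\}$ with weight $+1$. (iii) If $[f]\ne[g]$, blocks $[f],[g]$ replaced by $([f]\cup[g]\setminus\{f,g\})\cup\{f'\}$ with weight $\omega_{\mathcal{F}}([f])+\omega_{\mathcal{F}}([g])$. Contraction $\underline{\mathbb{G}}/e$: ribbon graph $\mathbb{G}/e$, $\mathcal{F},\omega_{\mathcal{F}}$ transported. (i) If $e$ is a loop at $u$, contraction creates $u',v'$ replacing $u$; $[u]$ becomes $([u]\setminus\{u\})\cup\{u',v'\}$ with weight $+1$. (ii) If $e$ has ends $u\ne v$, $[u]=[v]$, merged vertex $u'$; block becomes $([u]\setminus\{u,v\})\cup\{u'\}$ with weight $+1$. (iii) If $[u]\neq[v]$, blocks merged to $([u]\cup[v]\setminus\{u,v\})\cup\{u'\}$ with weight $\omega_{\mathcal{V}}([u])+\omega_{\mathcal{V}}([v])$. Other blocks/weights unchanged. Packaging: $G(\mathbb{G};\mathcal{V})$ has vertex set $\mathcal{V}$ and an edge $([u],[v])$ for each edge $(u,v)$ of $\mathbb{G}$;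 likewise $G(\mathbb{G}^*;\mathcal{F})$. For a subgraph $K$ of $G(\mathbb{G};\mathcal{V})$, $\mathbb{G}[K]$ is the ribbon subgraph with all vertices in blocks that are vertices of $K$ and edges corresponding to those of $K$, and $\underline{\mathbb{G}}_\mathcal{V}[K]=(\mathbb{G}[K],\mathcal{V}',\omega'_{\mathcal{V}})$ with restrictions; for a subgraph $H$ of $G(\mathbb{G}^*;\mathcal{F})$, $\underline{\mathbb{G}}_\mathcal{F}[H]=((\mathbb{G}^*[H])^*,\mathcal{F}',\omega'_{\mathcal{F}})$ with restrictions. If $G(\mathbb{G};\mathcal{V})$ is connected, $q^1_\Gamma(\underline{\mathbb{G}}_\mathcal{V})=|\Gamma|^{e(\mathbb{G})-|\mathcal{V}|}\sum_i n_i^{f(\mathbb{G})-e(\mathbb{G})+|\mathcal{V}|-\omega_{\mathcal{V}}(\mathbb{G})}$, otherwise the product of $q^1_\Gamma(\underline{\mathbb{G}}_\mathcal{V}[K])$ over components $K$; $q_\Gamma(\underline{\mathbb{G}}_\mathcal{V})=\sum_{A\subseteq E}(-1)^{|A^c|}q^1_\Gamma((\mathbb{G}|A,\mathcal{V},\omega_{\mathcal{V}}))$. If $G(\mathbb{G}^*;\mathcal{F})$ is connected, $p^1_\Gamma(\underline{\mathbb{G}}_\mathcal{F})=|\Gamma|^{e(\mathbb{G})-|\mathcal{F}|}\sum_i n_i^{v(\mathbb{G})-e(\mathbb{G})+|\mathcal{F}|-\omega_{\mathcal{F}}(\mathbb{G})}$, otherwise the product of $p^1_\Gamma(\underline{\mathbb{G}}_\mathcal{F}[H])$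 over components $H$; $p_\Gamma(\underline{\mathbb{G}}_\mathcal{F})=\sum_{A\subseteq E}(-1)^{|A^c|}p^1_\Gamma((\mathbb{G}/A^c,\mathcal{F},\omega_{\mathcal{F}}))$. These definitions apply to $\underline{\mathbb{G}}\backslash e$ and $\underline{\mathbb{G}}/e$ with their updated partitions and weights. *)

theory Defs
  imports "HOL-Algebra.Group" "HOL-Combinatorics.Permutations" "Jordan_Normal_Form.Matrix"
begin

definition is_rep :: "'g monoid \<Rightarrow> nat \<Rightarrow> ('g \<Rightarrow> complex mat) \<Rightarrow> bool" where
  "is_rep G n \<rho> \<longleftrightarrow>
     (\<forall>g\<in>carrier G. \<rho> g \<in> carrier_mat n n) \<and>
     (\<forall>g\<in>carrier G. \<forall>h\<in>carrier G. \<rho> (g \<otimes>\<^bsub>G\<^esub> h) = \<rho> g * \<rho> h) \<and>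
     \<rho> \<one>\<^bsub>G\<^esub> = 1\<^sub>m n"

definition invariant_subspace :: "'g monoid \<Rightarrow> nat \<Rightarrow> ('g \<Rightarrow> complex mat) \<Rightarrow> complex vec set \<Rightarrow> bool" where
  "invariant_subspace G n \<rho> W \<longleftrightarrow>
     W \<subseteq> carrier_vec n \<and> 0\<^sub>v n \<in> W \<and>
     (\<forall>v\<in>W. \<forall>w\<in>W. v + w \<in> W) \<and> (\<forall>c. \<forall>v\<in>W. c \<cdot>\<^sub>v v \<in> W) \<and>
     (\<forall>g\<in>carrier G. \<forall>v\<in>W. \<rho> g *\<^sub>v v \<in> W)"

definition irreducible_rep :: "'g monoid \<Rightarrow> nat \<Rightarrow> ('g \<Rightarrow> complex mat) \<Rightarrow> bool" where
  "irreducible_rep G n \<rho> \<longleftrightarrow> n > 0 \<and> is_rep G n \<rho> \<and>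
     (\<forall>W. invariant_subspace G n \<rho> W \<longrightarrow> W = {0\<^sub>v n} \<or> W = carrier_vec n)"

definition iso_rep :: "'g monoid \<Rightarrow> nat \<Rightarrow> ('g \<Rightarrow> complex mat) \<Rightarrow> nat \<Rightarrow> ('g \<Rightarrow> complex mat) \<Rightarrow> bool" where
  "iso_rep G n \<rho> m \<rho>' \<longleftrightarrow> n = m \<and>
     (\<exists>T \<in> carrier_mat n n. invertible_mat T \<and> (\<forall>g\<in>carrier G. T * \<rho> g = \<rho>' g * T))"

definition irrep_dims :: "'g monoid \<Rightarrow> nat list \<Rightarrow> bool" where
  "irrep_dims G ns \<longleftrightarrow> (\<exists>\<rho>s :: nat \<Rightarrow> 'g \<Rightarrow> complex mat.
     (\<forall>i<length ns. irreducible_rep G (ns ! i) (\<rho>s i)) \<and>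
     (\<forall>i<length ns. \<forall>j<length ns. i \<noteq> j \<longrightarrow> \<not> iso_rep G (ns ! i) (\<rho>s i) (ns ! j) (\<rho>s j)) \<and>
     (\<forall>n \<rho>. irreducible_rep G n \<rho> \<longrightarrow> (\<exists>i<length ns. iso_rep G n \<rho> (ns ! i) (\<rho>s i))))"

section \<open>Orientable ribbon graphs as rotation systems\<close>

text \<open>Darts rD (two per edge, paired by the fixed-point-free involution ralp), rotation rsig
  at vertices (its cycles are the vertices with at least one edge), and a set rI of tokens,
  one per isolated vertex (an isolated vertex is a disc with one boundary component).
  Boundary components = cycles of rsig o ralp, plus one per isolated vertex.\<close>

record 'd rgraph =
  rD :: "'d set"
  rI :: "'d set"
  rsig :: "'d \<Rightarrow> 'd"
  ralp :: "'d \<Rightarrow> 'd"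

definition orb :: "('d \<Rightarrow> 'd) \<Rightarrow> 'd \<Rightarrow> 'd set" where
  "orb f x = {(f ^^ k) x | k. True}"

definition rg_phi :: "'d rgraph \<Rightarrow> 'd \<Rightarrow> 'd" where
  "rg_phi G = rsig G \<circ> ralp G"

definition wf_rg :: "'d rgraph \<Rightarrow> bool" where
  "wf_rg G \<longleftrightarrow> finite (rD G) \<and> finite (rI G) \<and> rD G \<inter> rI G = {} \<and>
     rsig G permutes rD G \<and> ralp G permutes rD G \<and>
     (\<forall>x\<in>rD G. ralp G (ralp G x) = x \<and> ralp G x \<noteq> x)"

definition rg_verts :: "'d rgraph \<Rightarrow> 'd set set" where
  "rg_verts G = {orb (rsig G) x | x. x \<in> rD G} \<union> {{t} | t. t \<in> rI G}"

definition rg_faces :: "'d rgraph \<Rightarrow> 'd set set" where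
  "rg_faces G = {orb (rg_phi G) x | x. x \<in> rD G} \<union> {{t} | t. t \<in> rI G}"

definition rg_edges :: "'d rgraph \<Rightarrow> 'd set set" where
  "rg_edges G = {{h, ralp G h} | h. h \<in> rD G}"

definition nv :: "'d rgraph \<Rightarrow> nat" where "nv G = card (rg_verts G)"
definition nf :: "'d rgraph \<Rightarrow> nat" where "nf G = card (rg_faces G)"
definition ne :: "'d rgraph \<Rightarrow> nat" where "ne G = card (rg_edges G)"

text \<open>Geometric dual: vertices become boundary components and vice versa.\<close>
definition rg_dual :: "'d rgraph \<Rightarrow> 'd rgraph" where
  "rg_dual G = G\<lparr>rsig := rg_phi G\<rparr>"

definition skip :: "('d \<Rightarrow> 'd) \<Rightarrow> 'd set \<Rightarrow> 'd \<Rightarrow> 'd" where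
  "skip \<pi> R x = (\<pi> ^^ (LEAST k. 0 < k \<and> (\<pi> ^^ k) x \<notin> R)) x"

text \<open>Vertices are kept;
  a vertex losing all its darts becomes an isolated vertex, represented by one of its old
  darts as token (so labels on it are transported).\<close>
definition rg_del_edges :: "'d rgraph \<Rightarrow> 'd set \<Rightarrow> 'd rgraph" where
  "rg_del_edges G R =
    \<lparr> rD = rD G - R,
      rI = rI G \<union> (\<lambda>v. SOME x. x \<in> v) ` {v. \<exists>x\<in>rD G. v = orb (rsig G) x \<and> v \<subseteq> R},
      rsig = (\<lambda>x. if x \<in> rD G - R then skip (rsig G) R x else x),
      ralp = (\<lambda>x. if x \<in> rD G - R then ralp G x else x) \<rparr>"

definition rg_con_edges :: "'d rgraph \<Rightarrow> 'd set \<Rightarrow> 'd rgraph" where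
  "rg_con_edges G R = rg_dual (rg_del_edges (rg_dual G) R)"

definition rg_restrict :: "'d rgraph \<Rightarrow> 'd set \<Rightarrow> 'd rgraph" where
  "rg_restrict G S =
    \<lparr> rD = rD G \<inter> S, rI = rI G \<inter> S,
      rsig = (\<lambda>x. if x \<in> rD G \<inter> S then rsig G x else x),
      ralp = (\<lambda>x. if x \<in> rD G \<inter> S then ralp G x else x) \<rparr>"

text \<open>The partition V of the vertices is given by a labelling plv of darts/tokens that is
  constant on vertices (blocks = labels in use), with weights pwv on blocks; likewise the
  partition F of boundary components by plf, pwf.\<close>

record ('d, 'b, 'c) pkg =
  prg :: "'d rgraph"
  plv :: "'d \<Rightarrow> 'b"
  pwv :: "'b \<Rightarrow> nat"
  plf :: "'d \<Rightarrow> 'c"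
  pwf :: "'c \<Rightarrow> nat"

definition wf_pkg :: "('d, 'b, 'c) pkg \<Rightarrow> bool" where
  "wf_pkg P \<longleftrightarrow> wf_rg (prg P) \<and>
     (\<forall>x\<in>rD (prg P). plv P (rsig (prg P) x) = plv P x) \<and>
     (\<forall>x\<in>rD (prg P). plf P (rg_phi (prg P) x) = plf P x)"

definition blocksV :: "('d, 'b, 'c) pkg \<Rightarrow> 'b set" where
  "blocksV P = plv P ` (rD (prg P) \<union> rI (prg P))"

definition blocksF :: "('d, 'b, 'c) pkg \<Rightarrow> 'c set" where
  "blocksF P = plf P ` (rD (prg P) \<union> rI (prg P))"

definition totV :: "('d, 'b, 'c) pkg \<Rightarrow> nat" where
  "totV P = (\<Sum>b\<in>blocksV P. pwv P b)"

definition totF :: "('d, 'b, 'c) pkg \<Rightarrow> nat" where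
  "totF P = (\<Sum>b\<in>blocksF P. pwf P b)"

definition bsizeV :: "('d, 'b, 'c) pkg \<Rightarrow> 'b \<Rightarrow> nat" where
  "bsizeV P b = card {v \<in> rg_verts (prg P). \<exists>x\<in>v. plv P x = b}"

definition bsizeF :: "('d, 'b, 'c) pkg \<Rightarrow> 'c \<Rightarrow> nat" where
  "bsizeF P b = card {f \<in> rg_faces (prg P). \<exists>x\<in>f. plf P x = b}"

definition mu :: "('d, 'b, 'c) pkg \<Rightarrow> 'd \<Rightarrow> nat" where
  "mu P h = card {plv P h, plv P (ralp (prg P) h)}"

definition eta :: "('d, 'b, 'c) pkg \<Rightarrow> 'd \<Rightarrow> nat" where
  "eta P h = card {plf P h, plf P (ralp (prg P) h)}"

definition pdelete :: "('d, 'b, 'c) pkg \<Rightarrow> 'd \<Rightarrow> ('d, 'b, 'c) pkg" where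
  "pdelete P h =
    (let G = prg P; h' = ralp G h; lf = plf P; wf = pwf P in
     if lf h = lf h'
     then P\<lparr>prg := rg_del_edges G {h, h'}, pwf := wf(lf h := wf (lf h) + 1)\<rparr>
     else P\<lparr>prg := rg_del_edges G {h, h'},
            plf := (\<lambda>x. if lf x = lf h' then lf h else lf x),
            pwf := wf(lf h := wf (lf h) + wf (lf h'))\<rparr>)"

definition pdual :: "('d, 'b, 'c) pkg \<Rightarrow> ('d, 'c, 'b) pkg" where
  "pdual P = \<lparr>prg = rg_dual (prg P), plv = plf P, pwv = pwf P, plf = plv P, pwf = pwv P\<rparr>"

text \<open>Contraction (G/e = (G^* \ e)^*); the rules for V are exactly the deletion rules for F
  of the dual.\<close>
definition pcontract :: "('d, 'b, 'c) pkg \<Rightarrow> 'd \<Rightarrow> ('d, 'b, 'c) pkg" where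
  "pcontract P h = pdual (pdelete (pdual P) h)"

definition linkV :: "('d, 'b, 'c) pkg \<Rightarrow> ('b \<times> 'b) set" where
  "linkV P = {(plv P h, plv P (ralp (prg P) h)) | h. h \<in> rD (prg P)}"

definition compsV :: "('d, 'b, 'c) pkg \<Rightarrow> 'b set set" where
  "compsV P = {{b'. (b, b') \<in> (linkV P)\<^sup>*} | b. b \<in> blocksV P}"

definition linkF :: "('d, 'b, 'c) pkg \<Rightarrow> ('c \<times> 'c) set" where
  "linkF P = {(plf P h, plf P (ralp (prg P) h)) | h. h \<in> rD (prg P)}"

definition compsF :: "('d, 'b, 'c) pkg \<Rightarrow> 'c set set" where
  "compsF P = {{b'. (b, b') \<in> (linkF P)\<^sup>*} | b. b \<in> blocksF P}"

definition subV :: "('d, 'b, 'c) pkg \<Rightarrow> 'b set \<Rightarrow> ('d, 'b, 'c) pkg" where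
  "subV P K = P\<lparr>prg := rg_restrict (prg P) {x. plv P x \<in> K}\<rparr>"

definition subF :: "('d, 'b, 'c) pkg \<Rightarrow> 'c set \<Rightarrow> ('d, 'b, 'c) pkg" where
  "subF P H = P\<lparr>prg := rg_dual (rg_restrict (rg_dual (prg P)) {x. plf P x \<in> H})\<rparr>"

text \<open>N = |Gamma|, ns = [n_1, ..., n_k].\<close>

definition q1conn :: "real \<Rightarrow> nat list \<Rightarrow> ('d, 'b, 'c) pkg \<Rightarrow> real" where
  "q1conn N ns P =
     N powi (int (ne (prg P)) - int (card (blocksV P))) *
     sum_list (map (\<lambda>n. real n powi
        (int (nf (prg P)) - int (ne (prg P)) + int (card (blocksV P)) - int (totV P))) ns)"

definition q1 :: "real \<Rightarrow> nat list \<Rightarrow> ('d, 'b, 'c) pkg \<Rightarrow> real" where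
  "q1 N ns P = (\<Prod>K\<in>compsV P. q1conn N ns (subV P K))"

definition qG :: "real \<Rightarrow> nat list \<Rightarrow> ('d, 'b, 'c) pkg \<Rightarrow> real" where
  "qG N ns P = (\<Sum>A\<in>Pow (rg_edges (prg P)).
     (-1) ^ card (rg_edges (prg P) - A) *
     q1 N ns (P\<lparr>prg := rg_del_edges (prg P) (\<Union>(rg_edges (prg P) - A))\<rparr>))"

definition p1conn :: "real \<Rightarrow> nat list \<Rightarrow> ('d, 'b, 'c) pkg \<Rightarrow> real" where
  "p1conn N ns P =
     N powi (int (ne (prg P)) - int (card (blocksF P))) *
     sum_list (map (\<lambda>n. real n powi
        (int (nv (prg P)) - int (ne (prg P)) + int (card (blocksF P)) - int (totF P))) ns)"

definition p1 :: "real \<Rightarrow> nat list \<Rightarrow> ('d, 'b, 'c) pkg \<Rightarrow> real" where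
  "p1 N ns P = (\<Prod>H\<in>compsF P. p1conn N ns (subF P H))"

definition pG :: "real \<Rightarrow> nat list \<Rightarrow> ('d, 'b, 'c) pkg \<Rightarrow> real" where
  "pG N ns P = (\<Sum>A\<in>Pow (rg_edges (prg P)).
     (-1) ^ card (rg_edges (prg P) - A) *
     p1 N ns (P\<lparr>prg := rg_con_edges (prg P) (\<Union>(rg_edges (prg P) - A))\<rparr>))"

end

theory Submission
  imports Defs
begin

section \<open>Orbits\<close>

lemma funpow_comb: "(p ^^ a) ((p ^^ b) x) = (p ^^ (a + b)) x"
  by (simp add: funpow_add)

lemma perm_period:
  assumes "p permutes Y" "finite Y"
  obtains n where "n > 0" "(p ^^ n) x = x"
  using permutation_self[OF permutes_imp_permutation[OF assms(2,1)]] by blast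

lemma funpow_permutes_in: "p permutes Y \<Longrightarrow> x \<in> Y \<Longrightarrow> (p ^^ k) x \<in> Y"
  by (induct k) (auto simp: permutes_in_image)

lemma funpow_permutes_out: "p permutes Y \<Longrightarrow> x \<notin> Y \<Longrightarrow> (p ^^ k) x = x"
  by (induct k) (auto simp: permutes_not_in)

lemma orb_self: "x \<in> orb p x"
  unfolding orb_def by (auto intro: exI[of _ 0])

lemma orb_step_in: "z \<in> orb p x \<Longrightarrow> p z \<in> orb p x"
proof -
  assume "z \<in> orb p x"
  then obtain k where "z = (p ^^ k) x" unfolding orb_def by auto
  hence "p z = (p ^^ Suc k) x" by simp
  thus ?thesis unfolding orb_def by blast
qed

lemma orb_funpow_in: "z \<in> orb p x \<Longrightarrow> (p ^^ k) z \<in> orb p x"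
  by (induct k) (auto intro: orb_step_in)

lemma orb_subset: "z \<in> orb p x \<Longrightarrow> orb p z \<subseteq> orb p x"
  unfolding orb_def[of p z] by (auto intro: orb_funpow_in)

lemma orb_sub_Y: "p permutes Y \<Longrightarrow> x \<in> Y \<Longrightarrow> orb p x \<subseteq> Y"
  unfolding orb_def by (auto intro: funpow_permutes_in)

lemma orb_same:
  assumes "p permutes Y" "finite Y" "z \<in> orb p x"
  shows "orb p z = orb p x"
proof
  show "orb p z \<subseteq> orb p x" using orb_subset[OF assms(3)] .
  obtain k where k: "z = (p ^^ k) x" using assms(3) unfolding orb_def by auto
  obtain n where n: "n > 0" "(p ^^ n) x = x" using perm_period[OF assms(1,2)] by blast
  have "(p ^^ (n * k)) x = x"
  proof -
    have "((p ^^ n) ^^ k) x = x" by (induct k) (auto simp: n(2))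
    thus ?thesis by (simp add: funpow_mult mult.commute)
  qed
  moreover have "n * k \<ge> k" using n(1) by simp
  ultimately have "(p ^^ (n * k - k)) z = x"
    using k by (simp add: funpow_comb)
  hence "x \<in> orb p z" unfolding orb_def by blast
  thus "orb p x \<subseteq> orb p z" by (rule orb_subset)
qed

lemma orb_disjoint_or_eq:
  assumes "p permutes Y" "finite Y" "z \<in> orb p x" "z \<in> orb p y"
  shows "orb p x = orb p y"
  using orb_same[OF assms(1,2,3)] orb_same[OF assms(1,2,4)] by simp

lemma inv_funpow: "(\<And>y. Q (p y) = Q y) \<Longrightarrow> Q ((p ^^ k) y) = Q y"
  by (induct k) auto

lemma inv_orb: "(\<And>y. Q (p y) = Q y) \<Longrightarrow> z \<in> orb p x \<Longrightarrow> Q z = Q x"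
  unfolding orb_def using inv_funpow[of Q p] by auto

lemma orb_cong:
  assumes "\<And>u. u \<in> orb f x \<Longrightarrow> f u = g u"
  shows "orb f x = orb g x"
proof -
  have "(f ^^ k) x = (g ^^ k) x" for k
  proof (induct k)
    case (Suc k)
    have "(f ^^ k) x \<in> orb f x" unfolding orb_def by blast
    then show ?case using Suc assms by simp
  qed simp
  thus ?thesis unfolding orb_def by simp
qed

lemma orb_cong_closed:
  assumes "x \<in> Z" "\<And>u. u \<in> Z \<Longrightarrow> f u = g u" "\<And>u. u \<in> Z \<Longrightarrow> g u \<in> Z"
  shows "orb f x = orb g x"
proof -
  have "(g ^^ k) x \<in> Z" for k by (induct k) (use assms in auto)
  have "(f ^^ k) x = (g ^^ k) x \<and> (g ^^ k) x \<in> Z" for k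
    by (induct k) (use assms in auto)
  thus ?thesis unfolding orb_def by simp
qed

section \<open>Skipping\<close>



lemma skip_ex:
  assumes "p permutes Y" "finite Y" "x \<notin> X"
  shows "\<exists>k. 0 < k \<and> (p ^^ k) x \<notin> X"
proof -
  obtain n where "n > 0" "(p ^^ n) x = x" using perm_period[OF assms(1,2)] by blast
  thus ?thesis using assms(3) by auto
qed

lemma skip_eqI:
  assumes "0 < k" "(p ^^ k) x \<notin> X" "\<And>j. 0 < j \<Longrightarrow> j < k \<Longrightarrow> (p ^^ j) x \<in> X"
  shows "skip p X x = (p ^^ k) x"
proof -
  have "(LEAST k. 0 < k \<and> (p ^^ k) x \<notin> X) = k"
  proof (rule Least_equality)
    show "0 < k \<and> (p ^^ k) x \<notin> X" using assms(1,2) by simp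
    fix y assume "0 < y \<and> (p ^^ y) x \<notin> X"
    thus "k \<le> y" using assms(3)[of y] by force
  qed
  thus ?thesis unfolding skip_def by simp
qed

lemma skip_char:
  assumes "\<exists>k. 0 < k \<and> (p ^^ k) x \<notin> X"
  obtains k where "0 < k" "(p ^^ k) x \<notin> X" "\<And>j. 0 < j \<Longrightarrow> j < k \<Longrightarrow> (p ^^ j) x \<in> X"
    "skip p X x = (p ^^ k) x"
proof -
  let ?k = "LEAST k. 0 < k \<and> (p ^^ k) x \<notin> X"
  have 1: "0 < ?k \<and> (p ^^ ?k) x \<notin> X" using LeastI_ex[OF assms] .
  have 2: "(p ^^ j) x \<in> X" if "0 < j" "j < ?k" for j
    using not_less_Least[OF that(2)] that(1) by blast
  show ?thesis
  proof (rule that[of ?k])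
    show "0 < ?k" "(p ^^ ?k) x \<notin> X" using 1 by auto
    show "skip p X x = (p ^^ ?k) x" unfolding skip_def ..
  qed (use 2 in auto)
qed

lemma skip_props:
  assumes "p permutes Y" "finite Y" "x \<notin> X"
  shows "skip p X x \<notin> X" "skip p X x \<in> orb p x"
proof -
  obtain k where "0 < k" "(p ^^ k) x \<notin> X"
    "\<And>j. 0 < j \<Longrightarrow> j < k \<Longrightarrow> (p ^^ j) x \<in> X" "skip p X x = (p ^^ k) x"
    using skip_char[OF skip_ex[OF assms]] by blast
  thus "skip p X x \<notin> X" "skip p X x \<in> orb p x" unfolding orb_def by auto
qed

lemma skip_in_Y:
  assumes "p permutes Y" "finite Y" "x \<notin> X" "x \<in> Y"
  shows "skip p X x \<in> Y"
  using skip_props[OF assms(1-3)] orb_sub_Y[OF assms(1,4)] by blast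

lemma orb_skip_sup:
  assumes "p permutes Y" "finite Y" "x \<notin> X"
  shows "(p ^^ m) x \<notin> X \<Longrightarrow> (p ^^ m) x \<in> orb (skip p X) x"
proof (induct m rule: less_induct)
  case (less m)
  show ?case
  proof (cases "m = 0")
    case True then show ?thesis using orb_self by simp
  next
    case False
    let ?S = "{m'. m' < m \<and> (p ^^ m') x \<notin> X}"
    have fin: "finite ?S" by simp
    have ne: "0 \<in> ?S" using False assms(3) by simp
    define m0 where "m0 = Max ?S"
    have m0S: "m0 \<in> ?S" unfolding m0_def using fin ne by (intro Max_in) auto
    have m0max: "m' \<le> m0" if "m' \<in> ?S" for m' unfolding m0_def using fin that by simp
    have A: "(p ^^ m0) x \<in> orb (skip p X) x" using less m0S by blast
    have split: "(p ^^ (m - m0)) ((p ^^ m0) x) = (p ^^ m) x"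
      using m0S by (simp add: funpow_comb)
    have "skip p X ((p ^^ m0) x) = (p ^^ (m - m0)) ((p ^^ m0) x)"
    proof (rule skip_eqI)
      show "0 < m - m0" using m0S by simp
      show "(p ^^ (m - m0)) ((p ^^ m0) x) \<notin> X"
        using less(2) split by simp
      fix j assume j: "0 < j" "j < m - m0"
      have "m0 + j \<notin> ?S" using m0max[of "m0 + j"] j by auto
      hence "(p ^^ (m0 + j)) x \<in> X" using j by auto
      thus "(p ^^ j) ((p ^^ m0) x) \<in> X" by (simp add: funpow_comb add.commute)
    qed
    thus ?thesis using A split orb_step_in[OF A] by metis
  qed
qed

lemma orb_skip:
  assumes "p permutes Y" "finite Y" "x \<notin> X"
  shows "orb (skip p X) x = orb p x - X"
proof
  have "((skip p X) ^^ k) x \<in> orb p x - X" for k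
  proof (induct k)
    case 0 then show ?case using assms orb_self by auto
  next
    case (Suc k)
    let ?z = "((skip p X) ^^ k) x"
    have 1: "skip p X ?z \<in> orb p ?z" "skip p X ?z \<notin> X"
      using skip_props[OF assms(1,2)] Suc by auto
    have 2: "orb p ?z \<subseteq> orb p x" using Suc orb_subset[of ?z p x] by simp
    have "skip p X ?z \<in> orb p x" using 1(1) 2 by blast
    thus ?case using 1 by simp
  qed
  note K = this
  show "orb (skip p X) x \<subseteq> orb p x - X"
  proof
    fix z assume "z \<in> orb (skip p X) x"
    then obtain k where "z = ((skip p X) ^^ k) x" unfolding orb_def by auto
    thus "z \<in> orb p x - X" using K by simp
  qed
next
  show "orb p x - X \<subseteq> orb (skip p X) x"
  proof
    fix z assume z: "z \<in> orb p x - X"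
    then obtain m where "z = (p ^^ m) x" unfolding orb_def by auto
    thus "z \<in> orb (skip p X) x" using orb_skip_sup[OF assms, of m] z by simp
  qed
qed

lemma skip_shift:
  assumes "p y = q z" "\<And>u. u \<in> X \<Longrightarrow> p u = q u" "\<exists>k. 0 < k \<and> (q ^^ k) z \<notin> X"
  shows "skip p X y = skip q X z"
proof -
  obtain k where k: "0 < k" "(q ^^ k) z \<notin> X" "\<And>j. 0 < j \<Longrightarrow> j < k \<Longrightarrow> (q ^^ j) z \<in> X"
    "skip q X z = (q ^^ k) z" using skip_char[OF assms(3)] by blast
  have eq: "(p ^^ j) y = (q ^^ j) z" if "0 < j" "j \<le> k" for j
    using that
  proof (induct j)
    case (Suc j)
    show ?case
    proof (cases "j = 0")
      case True then show ?thesis using assms(1) by simp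
    next
      case False
      hence "(q ^^ j) z \<in> X" using k(3) Suc by simp
      then show ?thesis using Suc False assms(2) by simp
    qed
  qed simp
  have "skip p X y = (p ^^ k) y"
    by (rule skip_eqI) (use k eq in auto)
  thus ?thesis using eq[of k] k by simp
qed

lemma skip_inj:
  assumes "p permutes Y" "finite Y"
  shows "inj_on (skip p X) (- X)"
proof
  fix x y assume x: "x \<in> - X" and y: "y \<in> - X" and eq: "skip p X x = skip p X y"
  obtain k where k: "0 < k" "\<And>j. 0 < j \<Longrightarrow> j < k \<Longrightarrow> (p ^^ j) x \<in> X" "skip p X x = (p ^^ k) x"
    using skip_char[OF skip_ex[OF assms, of x X]] x by auto
  obtain l where l: "0 < l" "\<And>j. 0 < j \<Longrightarrow> j < l \<Longrightarrow> (p ^^ j) y \<in> X" "skip p X y = (p ^^ l) y"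
    using skip_char[OF skip_ex[OF assms, of y X]] y by auto
  have injk: "inj (p ^^ n)" for n using permutes_inj[OF assms(1)] by (rule inj_fn)
  have "(p ^^ k) x = (p ^^ l) y" using k l eq by simp
  show "x = y"
  proof (cases k l rule: linorder_cases)
    case less
    have "(p ^^ k) x = (p ^^ k) ((p ^^ (l - k)) y)"
      using \<open>(p ^^ k) x = (p ^^ l) y\<close> less by (simp add: funpow_comb)
    hence "x = (p ^^ (l - k)) y" using injk[of k] by (simp add: inj_eq)
    moreover have "(p ^^ (l - k)) y \<in> X" using l(2)[of "l - k"] less k(1) by simp
    ultimately show ?thesis using x by simp
  next
    case equal
    then show ?thesis using \<open>(p ^^ k) x = (p ^^ l) y\<close> injk[of k] by (simp add: inj_eq)
  next
    case greater
    have "(p ^^ l) y = (p ^^ l) ((p ^^ (k - l)) x)"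
      using \<open>(p ^^ k) x = (p ^^ l) y\<close> greater by (simp add: funpow_comb)
    hence "y = (p ^^ (k - l)) x" using injk[of l] by (simp add: inj_eq)
    moreover have "(p ^^ (k - l)) x \<in> X" using k(2)[of "k - l"] greater l(1) by simp
    ultimately show ?thesis using y by simp
  qed
qed

lemma skip_permutes:
  assumes "p permutes Y" "finite Y"
  shows "(\<lambda>x. if x \<in> Y - X then skip p X x else x) permutes (Y - X)"
proof (rule bij_imp_permutes)
  let ?f = "\<lambda>x. if x \<in> Y - X then skip p X x else x"
  have im: "?f ` (Y - X) \<subseteq> Y - X"
    using skip_in_Y[OF assms] skip_props[OF assms] by auto
  have inj: "inj_on ?f (Y - X)"
    using inj_on_subset[OF skip_inj[OF assms, of X]] unfolding inj_on_def by auto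
  have "?f ` (Y - X) = Y - X" using endo_inj_surj[OF _ im inj] assms(2) by simp
  thus "bij_betw ?f (Y - X) (Y - X)" using inj by (simp add: bij_betw_def)
qed auto

lemma del_simps[simp]:
  "rD (rg_del_edges G R) = rD G - R"
  "rI (rg_del_edges G R) = rI G \<union> (\<lambda>v. SOME x. x \<in> v) ` {v. \<exists>x\<in>rD G. v = orb (rsig G) x \<and> v \<subseteq> R}"
  "rsig (rg_del_edges G R) = (\<lambda>x. if x \<in> rD G - R then skip (rsig G) R x else x)"
  "ralp (rg_del_edges G R) = (\<lambda>x. if x \<in> rD G - R then ralp G x else x)"
  by (simp_all add: rg_del_edges_def)

lemma dual_simps[simp]:
  "rD (rg_dual G) = rD G" "rI (rg_dual G) = rI G" "ralp (rg_dual G) = ralp G"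
  "rsig (rg_dual G) = rg_phi G"
  by (simp_all add: rg_dual_def)

lemma restrict_simps[simp]:
  "rD (rg_restrict G S) = rD G \<inter> S" "rI (rg_restrict G S) = rI G \<inter> S"
  "rsig (rg_restrict G S) = (\<lambda>x. if x \<in> rD G \<inter> S then rsig G x else x)"
  "ralp (rg_restrict G S) = (\<lambda>x. if x \<in> rD G \<inter> S then ralp G x else x)"
  by (simp_all add: rg_restrict_def)

lemma edges_dual[simp]: "rg_edges (rg_dual G) = rg_edges G"
  by (simp add: rg_edges_def)

lemma verts_dual: "rg_verts (rg_dual G) = rg_faces G"
  by (simp add: rg_verts_def rg_faces_def)

definition closedR :: "'d rgraph \<Rightarrow> 'd set \<Rightarrow> bool" where
  "closedR G R \<longleftrightarrow> R \<subseteq> rD G \<and> (\<forall>x\<in>R. ralp G x \<in> R)"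

definition aR :: "'d rgraph \<Rightarrow> 'd set \<Rightarrow> 'd \<Rightarrow> 'd" where
  "aR G R x = (if x \<in> R then x else ralp G x)"

definition psiR :: "'d rgraph \<Rightarrow> 'd set \<Rightarrow> 'd \<Rightarrow> 'd" where
  "psiR G R x = rsig G (aR G R x)"

lemma wf_parts:
  assumes "wf_rg G"
  shows "finite (rD G)" "finite (rI G)" "rD G \<inter> rI G = {}" "rsig G permutes rD G"
    "ralp G permutes rD G" "\<And>x. x \<in> rD G \<Longrightarrow> ralp G (ralp G x) = x"
    "\<And>x. x \<in> rD G \<Longrightarrow> ralp G x \<noteq> x"
  using assms unfolding wf_rg_def by auto

lemma alp_alp: "wf_rg G \<Longrightarrow> ralp G (ralp G x) = x"
proof (cases "x \<in> rD G")
  case True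
  assume "wf_rg G" thus ?thesis using wf_parts(6)[OF \<open>wf_rg G\<close> True] by simp
next
  case False
  assume w: "wf_rg G"
  have "ralp G x = x" using permutes_not_in[OF wf_parts(5)[OF w] False] .
  thus ?thesis by simp
qed

lemma alp_out: "wf_rg G \<Longrightarrow> x \<notin> rD G \<Longrightarrow> ralp G x = x"
  by (rule permutes_not_in[OF wf_parts(5)])

lemma sig_out: "wf_rg G \<Longrightarrow> x \<notin> rD G \<Longrightarrow> rsig G x = x"
  by (rule permutes_not_in[OF wf_parts(4)])

lemma alp_in: "wf_rg G \<Longrightarrow> x \<in> rD G \<Longrightarrow> ralp G x \<in> rD G"
  by (simp add: permutes_in_image[OF wf_parts(5)])

lemma sig_in: "wf_rg G \<Longrightarrow> x \<in> rD G \<Longrightarrow> rsig G x \<in> rD G"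
  by (simp add: permutes_in_image[OF wf_parts(4)])

lemma alp_notR: "wf_rg G \<Longrightarrow> closedR G R \<Longrightarrow> x \<notin> R \<Longrightarrow> ralp G x \<notin> R"
proof
  assume "wf_rg G" "closedR G R" "x \<notin> R" "ralp G x \<in> R"
  hence "ralp G (ralp G x) \<in> R" unfolding closedR_def by blast
  thus False using alp_alp[OF \<open>wf_rg G\<close>, of x] \<open>x \<notin> R\<close> by simp
qed

lemma involution_permutes:
  assumes "\<And>x. f (f x) = x" "\<And>x. x \<notin> S \<Longrightarrow> f x = x"
  shows "f permutes S"
  unfolding permutes_def
proof (intro conjI allI impI)
  fix x assume "x \<notin> S" thus "f x = x" by (rule assms(2))
next
  fix y show "\<exists>!x. f x = y"
  proof (rule ex1I[of _ "f y"])
    show "f (f y) = y" by (rule assms(1))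
    fix x assume "f x = y" thus "x = f y" using assms(1)[of x] by simp
  qed
qed

lemma aR_permutes:
  assumes "wf_rg G" "closedR G R"
  shows "aR G R permutes rD G"
proof (rule involution_permutes)
  show "aR G R (aR G R x) = x" for x
    using alp_notR[OF assms] alp_alp[OF assms(1)] unfolding aR_def by auto
  show "aR G R x = x" if "x \<notin> rD G" for x
    using that assms alp_out unfolding aR_def closedR_def by auto
qed

lemma psiR_permutes:
  assumes "wf_rg G" "closedR G R"
  shows "psiR G R permutes rD G"
proof -
  have "rsig G \<circ> aR G R permutes rD G"
    by (rule permutes_compose[OF aR_permutes[OF assms] wf_parts(4)[OF assms(1)]])
  thus ?thesis by (simp add: psiR_def[abs_def] comp_def)
qed

lemma phi_permutes: "wf_rg G \<Longrightarrow> rg_phi G permutes rD G"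
  unfolding rg_phi_def by (rule permutes_compose[OF wf_parts(5) wf_parts(4)])

lemma wf_dual: "wf_rg G \<Longrightarrow> wf_rg (rg_dual G)"
proof -
  assume w: "wf_rg G"
  have "rg_phi G permutes rD G" by (rule phi_permutes[OF w])
  thus ?thesis using w unfolding wf_rg_def by simp
qed

lemma dual_dual: "wf_rg G \<Longrightarrow> rg_dual (rg_dual G) = G"
proof -
  assume w: "wf_rg G"
  have "rsig G \<circ> ralp G \<circ> ralp G = rsig G"
    by (rule ext) (simp add: alp_alp[OF w])
  thus ?thesis by (simp add: rg_dual_def rg_phi_def)
qed

lemma tok_sub:
  assumes "v \<in> {v. \<exists>x\<in>rD G. v = orb (rsig G) x \<and> v \<subseteq> R}"
  shows "(SOME x. x \<in> v) \<in> v" "(SOME x. x \<in> v) \<in> R"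
proof -
  obtain x where "v = orb (rsig G) x" "v \<subseteq> R" using assms by auto
  hence "x \<in> v" using orb_self by auto
  thus "(SOME x. x \<in> v) \<in> v" by (rule someI)
  thus "(SOME x. x \<in> v) \<in> R" using \<open>v \<subseteq> R\<close> by auto
qed

lemma wf_del:
  assumes "wf_rg G" "closedR G R"
  shows "wf_rg (rg_del_edges G R)"
proof -
  note w = wf_parts[OF assms(1)]
  have fin: "finite {v. \<exists>x\<in>rD G. v = orb (rsig G) x \<and> v \<subseteq> R}"
    by (rule finite_subset[of _ "(\<lambda>x. orb (rsig G) x) ` rD G"]) (auto simp: w(1))
  have disj: "(rD G - R) \<inter> rI (rg_del_edges G R) = {}"
  proof -
    have "(\<lambda>v. SOME x. x \<in> v) ` {v. \<exists>x\<in>rD G. v = orb (rsig G) x \<and> v \<subseteq> R} \<subseteq> R"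
      using tok_sub(2) by (intro image_subsetI) 
    thus ?thesis using w(3) by auto
  qed
  have p1: "(\<lambda>x. if x \<in> rD G - R then skip (rsig G) R x else x) permutes (rD G - R)"
    by (rule skip_permutes[OF w(4) w(1)])
  have p2: "(\<lambda>x. if x \<in> rD G - R then ralp G x else x) permutes (rD G - R)"
  proof (rule involution_permutes)
    fix x show "(\<lambda>x. if x \<in> rD G - R then ralp G x else x) ((\<lambda>x. if x \<in> rD G - R then ralp G x else x) x) = x"
      using alp_in[OF assms(1)] alp_notR[OF assms] alp_alp[OF assms(1)] by auto
  qed auto
  have p3: "\<forall>x\<in>rD G - R. ralp G (ralp G x) = x \<and> ralp G x \<noteq> x"
    using w(7) alp_alp[OF assms(1)] by blast
  have p4: "x \<in> rD G - R \<Longrightarrow> ralp G x \<in> rD G - R" for x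
    using alp_in[OF assms(1), of x] alp_notR[OF assms, of x] by blast
  have p5: "\<forall>x\<in>rD (rg_del_edges G R). ralp (rg_del_edges G R) (ralp (rg_del_edges G R) x) = x \<and>
      ralp (rg_del_edges G R) x \<noteq> x"
    using p3 p4 by simp
  have p6: "finite (rI (rg_del_edges G R))" using w(2) fin by simp
  show ?thesis unfolding wf_rg_def
    using w(1) p6 disj p1 p2 p5 by simp
qed

lemma closedR_dual[simp]: "closedR (rg_dual G) R = closedR G R"
  by (simp add: closedR_def)

lemma wf_con:
  assumes "wf_rg G" "closedR G R"
  shows "wf_rg (rg_con_edges G R)"
  unfolding rg_con_edges_def using assms by (simp add: wf_dual wf_del)

lemma edge_closed:
  assumes "wf_rg G" "h \<in> rD G"
  shows "closedR G {h, ralp G h}"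
  using alp_in[OF assms] alp_alp[OF assms(1), of h] assms(2) unfolding closedR_def by simp

lemma edges_closed:
  assumes "wf_rg G" "A \<subseteq> rg_edges G"
  shows "closedR G (\<Union>A)"
  unfolding closedR_def
proof (intro conjI ballI subsetI)
  fix x assume "x \<in> \<Union>A"
  then obtain E where E: "E \<in> A" "x \<in> E" by auto
  then obtain y where y: "y \<in> rD G" "E = {y, ralp G y}" using assms(2) unfolding rg_edges_def by auto
  show "x \<in> rD G" using E y alp_in[OF assms(1) y(1)] by auto
  have "ralp G x \<in> E" using E y alp_alp[OF assms(1), of y] by auto
  thus "ralp G x \<in> \<Union>A" using E by auto
qed

lemma edges_del:
  assumes "wf_rg G" "closedR G R"
  shows "rg_edges (rg_del_edges G R) = {{x, ralp G x} | x. x \<in> rD G - R}"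
proof -
  have "rg_edges (rg_del_edges G R) = (\<lambda>h. {h, ralp (rg_del_edges G R) h}) ` rD (rg_del_edges G R)"
    unfolding rg_edges_def by blast
  also have "\<dots> = (\<lambda>h. {h, ralp G h}) ` (rD G - R)"
    by (rule image_cong) auto
  finally show ?thesis by blast
qed

lemma edges_del_edge:
  assumes "wf_rg G" "h \<in> rD G"
  shows "rg_edges (rg_del_edges G {h, ralp G h}) = rg_edges G - {{h, ralp G h}}"
proof -
  have "{{x, ralp G x} | x. x \<in> rD G - {h, ralp G h}} = rg_edges G - {{h, ralp G h}}"
  proof
    show "{{x, ralp G x} | x. x \<in> rD G - {h, ralp G h}} \<subseteq> rg_edges G - {{h, ralp G h}}"
      unfolding rg_edges_def by auto
    show "rg_edges G - {{h, ralp G h}} \<subseteq> {{x, ralp G x} | x. x \<in> rD G - {h, ralp G h}}"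
    proof
      fix E assume E: "E \<in> rg_edges G - {{h, ralp G h}}"
      then obtain x where x: "x \<in> rD G" "E = {x, ralp G x}" unfolding rg_edges_def by auto
      have "x \<noteq> h" using E x by auto
      moreover have "x \<noteq> ralp G h" using E x alp_alp[OF assms(1), of h] by auto
      ultimately show "E \<in> {{x, ralp G x} | x. x \<in> rD G - {h, ralp G h}}" using x by auto
    qed
  qed
  thus ?thesis using edges_del[OF assms(1) edge_closed[OF assms]] by simp
qed

lemma edges_con_edge:
  assumes "wf_rg G" "h \<in> rD G"
  shows "rg_edges (rg_con_edges G {h, ralp G h}) = rg_edges G - {{h, ralp G h}}"
proof -
  have "rg_edges (rg_con_edges G {h, ralp G h}) = rg_edges (rg_del_edges (rg_dual G) {h, ralp (rg_dual G) h})"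
    by (simp add: rg_con_edges_def)
  also have "\<dots> = rg_edges (rg_dual G) - {{h, ralp (rg_dual G) h}}"
    by (rule edges_del_edge) (use assms wf_dual in auto)
  finally show ?thesis by simp
qed

lemma wf_pkg_parts:
  assumes "wf_pkg P"
  shows "wf_rg (prg P)" "\<And>x. plv P (rsig (prg P) x) = plv P x"
    "\<And>x. plf P (rg_phi (prg P) x) = plf P x"
proof -
  show w: "wf_rg (prg P)" using assms unfolding wf_pkg_def by auto
  fix x
  show "plv P (rsig (prg P) x) = plv P x"
    using assms sig_out[OF w, of x] unfolding wf_pkg_def by (cases "x \<in> rD (prg P)") auto
  show "plf P (rg_phi (prg P) x) = plf P x"
    using assms sig_out[OF w] alp_out[OF w, of x] unfolding wf_pkg_def rg_phi_def
    by (cases "x \<in> rD (prg P)") auto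
qed

lemma pdual_simps[simp]:
  "prg (pdual P) = rg_dual (prg P)" "plv (pdual P) = plf P" "pwv (pdual P) = pwf P"
  "plf (pdual P) = plv P" "pwf (pdual P) = pwv P"
  by (simp_all add: pdual_def)

lemma pdual_pdual: "wf_rg (prg P) \<Longrightarrow> pdual (pdual P) = P"
  by (cases P) (simp add: pdual_def dual_dual)

lemma wf_pkg_dual:
  assumes "wf_pkg P" shows "wf_pkg (pdual P)"
proof -
  note w = wf_pkg_parts[OF assms]
  have "plv P (rg_phi (rg_dual (prg P)) x) = plv P x" for x
    using w(2)[of x] alp_alp[OF w(1), of x] by (simp add: rg_phi_def)
  thus ?thesis unfolding wf_pkg_def using w wf_dual[OF w(1)] by simp
qed

definition mrg :: "('d \<Rightarrow> 'c) \<Rightarrow> 'd \<Rightarrow> 'd \<Rightarrow> 'd \<Rightarrow> 'c" where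
  "mrg l h h' x = (if l x = l h' then l h else l x)"

definition mrgw :: "('d \<Rightarrow> 'c) \<Rightarrow> ('c \<Rightarrow> nat) \<Rightarrow> 'd \<Rightarrow> 'd \<Rightarrow> 'c \<Rightarrow> nat" where
  "mrgw l w h h' = w(l h := w (l h) + (if l h = l h' then 1 else w (l h')))"

lemma pdelete_simps[simp]:
  "prg (pdelete P h) = rg_del_edges (prg P) {h, ralp (prg P) h}"
  "plv (pdelete P h) = plv P" "pwv (pdelete P h) = pwv P"
  "plf (pdelete P h) = mrg (plf P) h (ralp (prg P) h)"
  "pwf (pdelete P h) = mrgw (plf P) (pwf P) h (ralp (prg P) h)"
  by (auto simp: pdelete_def Let_def mrg_def mrgw_def fun_eq_iff)

lemma pcontract_simps[simp]:
  "prg (pcontract P h) = rg_con_edges (prg P) {h, ralp (prg P) h}"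
  "plv (pcontract P h) = mrg (plv P) h (ralp (prg P) h)"
  "pwv (pcontract P h) = mrgw (plv P) (pwv P) h (ralp (prg P) h)"
  "plf (pcontract P h) = plf P" "pwf (pcontract P h) = pwf P"
  by (simp_all add: pcontract_def rg_con_edges_def)

lemma skip_inv: "(\<And>y. Q (p y) = Q y) \<Longrightarrow> Q (skip p X x) = Q x"
  unfolding skip_def by (rule inv_funpow)

lemma wf_pkg_delete:
  assumes "wf_pkg P" "h \<in> rD (prg P)"
  shows "wf_pkg (pdelete P h)"
proof -
  let ?G = "prg P" let ?h' = "ralp ?G h" let ?e = "{h, ?h'}"
  note w = wf_pkg_parts[OF assms(1)]
  have cl: "closedR ?G ?e" by (rule edge_closed[OF w(1) assms(2)])
  have wd: "wf_rg (rg_del_edges ?G ?e)" by (rule wf_del[OF w(1) cl])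
  have lv: "plv P (skip (rsig ?G) ?e x) = plv P x" for x
    by (rule skip_inv) (rule w(2))
  let ?lf = "mrg (plf P) h ?h'"
  have psi_inv: "?lf (psiR ?G ?e y) = ?lf y" for y
  proof (cases "y \<in> rD ?G")
    case False then show ?thesis
      using alp_out[OF w(1) False] sig_out[OF w(1) False] by (simp add: psiR_def aR_def)
  next
    case True
    show ?thesis
    proof (cases "y \<in> ?e")
      case False
      hence "psiR ?G ?e y = rg_phi ?G y" by (simp add: psiR_def aR_def rg_phi_def)
      then show ?thesis using w(3)[of y] by (simp add: mrg_def)
    next
      case True
      hence "psiR ?G ?e y = rg_phi ?G (ralp ?G y)"
        by (simp add: psiR_def aR_def rg_phi_def alp_alp[OF w(1)])
      hence "?lf (psiR ?G ?e y) = ?lf (ralp ?G y)" using w(3)[of "ralp ?G y"] by (simp add: mrg_def)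
      also have "\<dots> = ?lf y" using True alp_alp[OF w(1), of h] by (auto simp: mrg_def)
      finally show ?thesis .
    qed
  qed
  have lf: "?lf (rg_phi (rg_del_edges ?G ?e) x) = ?lf x" if x: "x \<in> rD ?G - ?e" for x
  proof -
    have ax: "ralp ?G x \<in> rD ?G - ?e" using x alp_in[OF w(1)] alp_notR[OF w(1) cl] by auto
    have "rg_phi (rg_del_edges ?G ?e) x = skip (rsig ?G) ?e (ralp ?G x)"
      using x ax by (simp add: rg_phi_def)
    also have "\<dots> = skip (psiR ?G ?e) ?e x"
    proof (rule skip_shift[symmetric])
      show "psiR ?G ?e x = rsig ?G (ralp ?G x)" using x by (simp add: psiR_def aR_def)
      show "psiR ?G ?e u = rsig ?G u" if "u \<in> ?e" for u using that by (simp add: psiR_def aR_def)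
      show "\<exists>k>0. (rsig ?G ^^ k) (ralp ?G x) \<notin> ?e"
        using skip_ex[OF wf_parts(4)[OF w(1)] wf_parts(1)[OF w(1)], of "ralp ?G x" ?e] ax by simp
    qed
    finally show ?thesis using skip_inv[of ?lf, OF psi_inv] by simp
  qed
  show ?thesis unfolding wf_pkg_def using wd lv lf by simp
qed

lemma wf_pkg_contract:
  assumes "wf_pkg P" "h \<in> rD (prg P)"
  shows "wf_pkg (pcontract P h)"
  unfolding pcontract_def
  by (rule wf_pkg_dual, rule wf_pkg_delete, rule wf_pkg_dual) (use assms in auto)

lemma blocks_del:
  assumes "wf_pkg P" "closedR (prg P) R"
  shows "plv P ` (rD (rg_del_edges (prg P) R) \<union> rI (rg_del_edges (prg P) R)) =
         plv P ` (rD (prg P) \<union> rI (prg P))"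
proof -
  let ?G = "prg P"
  note w = wf_pkg_parts[OF assms(1)]
  have RD: "R \<subseteq> rD ?G" using assms(2) by (simp add: closedR_def)
  show ?thesis
  proof
    show "plv P ` (rD (rg_del_edges ?G R) \<union> rI (rg_del_edges ?G R)) \<subseteq> plv P ` (rD ?G \<union> rI ?G)"
      using tok_sub(2) RD by fastforce
    show "plv P ` (rD ?G \<union> rI ?G) \<subseteq> plv P ` (rD (rg_del_edges ?G R) \<union> rI (rg_del_edges ?G R))"
    proof
      fix b assume "b \<in> plv P ` (rD ?G \<union> rI ?G)"
      then obtain x where x: "x \<in> rD ?G \<union> rI ?G" "b = plv P x" by auto
      show "b \<in> plv P ` (rD (rg_del_edges ?G R) \<union> rI (rg_del_edges ?G R))"
      proof (cases "x \<in> R")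
        case False then show ?thesis using x by auto
      next
        case True
        let ?v = "orb (rsig ?G) x"
        have xD: "x \<in> rD ?G" using True RD by auto
        show ?thesis
        proof (cases "?v \<subseteq> R")
          case True
          let ?t = "SOME y. y \<in> ?v"
          have vin: "?v \<in> {v. \<exists>x\<in>rD ?G. v = orb (rsig ?G) x \<and> v \<subseteq> R}" using True xD by auto
          have "?t \<in> ?v" by (rule tok_sub(1)[OF vin])
          hence "plv P ?t = plv P x" by (rule inv_orb[of "plv P", OF w(2)])
          moreover have "?t \<in> rI (rg_del_edges ?G R)"
            unfolding del_simps by (intro UnI2 imageI vin)
          ultimately show ?thesis using x(2) by (intro image_eqI[of _ _ ?t]) auto
        next
          case False
          then obtain y where y: "y \<in> ?v" "y \<notin> R" by auto
          have "y \<in> rD ?G" using y orb_sub_Y[OF wf_parts(4)[OF w(1)] xD] by auto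
          moreover have "plv P y = plv P x" using y(1) by (rule inv_orb[of "plv P", OF w(2)])
          ultimately show ?thesis using x(2) y by (intro image_eqI[of _ _ y]) auto
        qed
      qed
    qed
  qed
qed

section \<open>Counting orbits after skipping\<close>

lemma SOME_in: "x \<in> v \<Longrightarrow> (SOME x. x \<in> v) \<in> v"
  by (rule someI)

lemma count_orbits:
  fixes p p' p0 :: "'d \<Rightarrow> 'd"
  assumes perm: "p permutes Y" and fin: "finite Y" and XY: "X \<subseteq> Y"
    and Qinv: "\<And>y. Q (p y) = Q y"
    and p': "\<And>y. y \<in> Y - X \<Longrightarrow> Q y \<Longrightarrow> p' y = skip p X y"
    and p0: "\<And>u. u \<in> X \<Longrightarrow> p0 u = p u"
  shows "card {orb p' y | y. y \<in> Y - X \<and> Q y} +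
         card {t \<in> (\<lambda>v. SOME x. x \<in> v) ` {v. \<exists>x\<in>Y. v = orb p0 x \<and> v \<subseteq> X}. Q t} =
         card {orb p y | y. y \<in> Y \<and> Q y}"
proof -
  define Os where "Os = {orb p y | y. y \<in> Y \<and> Q y}"
  define Os1 where "Os1 = {c \<in> Os. \<not> c \<subseteq> X}"
  define Os2 where "Os2 = {c \<in> Os. c \<subseteq> X}"
  have finO: "finite Os" unfolding Os_def
    by (rule finite_subset[of _ "orb p ` Y"]) (auto simp: fin)
  have OU: "Os = Os1 \<union> Os2" "Os1 \<inter> Os2 = {}" unfolding Os1_def Os2_def by auto
  have cardO: "card Os = card Os1 + card Os2"
    using OU finO by (simp add: card_Un_disjoint)
  have s1: "{orb p' y | y. y \<in> Y - X \<and> Q y} = (\<lambda>c. c - X) ` Os1"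
  proof
    show "{orb p' y | y. y \<in> Y - X \<and> Q y} \<subseteq> (\<lambda>c. c - X) ` Os1"
    proof
      fix c assume "c \<in> {orb p' y | y. y \<in> Y - X \<and> Q y}"
      then obtain y where y: "y \<in> Y - X" "Q y" "c = orb p' y" by auto
      have "orb p' y = orb (skip p X) y"
      proof (rule orb_cong_closed[of y "{z \<in> Y - X. Q z}"])
        show "y \<in> {z \<in> Y - X. Q z}" using y by auto
        fix u assume u: "u \<in> {z \<in> Y - X. Q z}"
        show "p' u = skip p X u" using u p' by auto
        show "skip p X u \<in> {z \<in> Y - X. Q z}"
          using u skip_in_Y[OF perm fin] skip_props(1)[OF perm fin] skip_inv[of Q p, OF Qinv] by auto
      qed
      also have "\<dots> = orb p y - X" using orb_skip[OF perm fin] y by auto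
      finally have "c = orb p y - X" using y by simp
      moreover have "orb p y \<in> Os1" unfolding Os1_def Os_def using y orb_self[of y p] by auto
      ultimately show "c \<in> (\<lambda>c. c - X) ` Os1" by auto
    qed
    show "(\<lambda>c. c - X) ` Os1 \<subseteq> {orb p' y | y. y \<in> Y - X \<and> Q y}"
    proof
      fix c' assume "c' \<in> (\<lambda>c. c - X) ` Os1"
      then obtain c where c: "c \<in> Os1" "c' = c - X" by auto
      then obtain y where y: "y \<in> Y" "Q y" "c = orb p y" "\<not> c \<subseteq> X" unfolding Os1_def Os_def by auto
      then obtain z where z: "z \<in> c" "z \<notin> X" by auto
      have oz: "orb p z = c" using orb_same[OF perm fin] z y by auto
      have zY: "z \<in> Y" using orb_sub_Y[OF perm y(1)] z y by auto
      have Qz: "Q z" using inv_orb[of Q p, OF Qinv] z y by auto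
      have "orb p' z = orb (skip p X) z"
      proof (rule orb_cong_closed[of z "{z \<in> Y - X. Q z}"])
        show "z \<in> {z \<in> Y - X. Q z}" using zY z Qz by auto
        fix u assume u: "u \<in> {z \<in> Y - X. Q z}"
        show "p' u = skip p X u" using u p' by auto
        show "skip p X u \<in> {z \<in> Y - X. Q z}"
          using u skip_in_Y[OF perm fin] skip_props(1)[OF perm fin] skip_inv[of Q p, OF Qinv] by auto
      qed
      also have "\<dots> = c - X" using orb_skip[OF perm fin z(2)] oz by simp
      finally show "c' \<in> {orb p' y | y. y \<in> Y - X \<and> Q y}" using c zY z Qz by auto
    qed
  qed
  have inj1: "inj_on (\<lambda>c. c - X) Os1"
  proof
    fix c1 c2 assume c1: "c1 \<in> Os1" and c2: "c2 \<in> Os1" and eq: "c1 - X = c2 - X"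
    obtain y1 where y1: "y1 \<in> Y" "c1 = orb p y1" "\<not> c1 \<subseteq> X" using c1 unfolding Os1_def Os_def by auto
    obtain y2 where y2: "y2 \<in> Y" "c2 = orb p y2" using c2 unfolding Os1_def Os_def by auto
    obtain z where "z \<in> c1" "z \<notin> X" using y1 by auto
    hence "z \<in> c2" using eq by auto
    thus "c1 = c2" using orb_disjoint_or_eq[OF perm fin] \<open>z \<in> c1\<close> y1 y2 by auto
  qed
  have V: "{v. \<exists>x\<in>Y. v = orb p0 x \<and> v \<subseteq> X} = {v. \<exists>x\<in>Y. v = orb p x \<and> v \<subseteq> X}"
  proof -
    have "orb p0 x = orb p x" if "orb p0 x \<subseteq> X" for x
      by (rule orb_cong) (use that p0 in auto)
    moreover have "orb p x = orb p0 x" if "orb p x \<subseteq> X" for x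
      by (rule orb_cong) (use that p0 in auto)
    ultimately show ?thesis by metis
  qed
  have s2: "{t \<in> (\<lambda>v. SOME x. x \<in> v) ` {v. \<exists>x\<in>Y. v = orb p x \<and> v \<subseteq> X}. Q t} =
      (\<lambda>v. SOME x. x \<in> v) ` Os2"
  proof
    show "{t \<in> (\<lambda>v. SOME x. x \<in> v) ` {v. \<exists>x\<in>Y. v = orb p x \<and> v \<subseteq> X}. Q t} \<subseteq> (\<lambda>v. SOME x. x \<in> v) ` Os2"
    proof
      fix t assume "t \<in> {t \<in> (\<lambda>v. SOME x. x \<in> v) ` {v. \<exists>x\<in>Y. v = orb p x \<and> v \<subseteq> X}. Q t}"
      then obtain x where x: "x \<in> Y" "orb p x \<subseteq> X" "t = (SOME y. y \<in> orb p x)" "Q t" by auto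
      have "t \<in> orb p x" using x(3) SOME_in[OF orb_self] by simp
      hence "Q x" using inv_orb[of Q p, OF Qinv] x(4) by auto
      hence "orb p x \<in> Os2" unfolding Os2_def Os_def using x by auto
      thus "t \<in> (\<lambda>v. SOME x. x \<in> v) ` Os2" using x(3) by auto
    qed
    show "(\<lambda>v. SOME x. x \<in> v) ` Os2 \<subseteq> {t \<in> (\<lambda>v. SOME x. x \<in> v) ` {v. \<exists>x\<in>Y. v = orb p x \<and> v \<subseteq> X}. Q t}"
    proof
      fix t assume "t \<in> (\<lambda>v. SOME x. x \<in> v) ` Os2"
      then obtain y where y: "y \<in> Y" "Q y" "orb p y \<subseteq> X" "t = (SOME x. x \<in> orb p y)"
        unfolding Os2_def Os_def by auto
      have "t \<in> orb p y" using y(4) SOME_in[OF orb_self] by simp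
      hence "Q t" using inv_orb[of Q p, OF Qinv] y(2) by auto
      thus "t \<in> {t \<in> (\<lambda>v. SOME x. x \<in> v) ` {v. \<exists>x\<in>Y. v = orb p x \<and> v \<subseteq> X}. Q t}"
        using y by auto
    qed
  qed
  have inj2: "inj_on (\<lambda>v. SOME x. x \<in> v) Os2"
  proof
    fix c1 c2 assume c1: "c1 \<in> Os2" and c2: "c2 \<in> Os2" and eq: "(SOME x. x \<in> c1) = (SOME x. x \<in> c2)"
    obtain y1 where y1: "y1 \<in> Y" "c1 = orb p y1" using c1 unfolding Os2_def Os_def by auto
    obtain y2 where y2: "y2 \<in> Y" "c2 = orb p y2" using c2 unfolding Os2_def Os_def by auto
    have "(SOME x. x \<in> c1) \<in> c1" using y1 SOME_in[OF orb_self] by simp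
    moreover have "(SOME x. x \<in> c2) \<in> c2" using y2 SOME_in[OF orb_self] by simp
    ultimately show "c1 = c2" using orb_disjoint_or_eq[OF perm fin] eq y1 y2 by metis
  qed
  show ?thesis
    unfolding V s1 s2 card_image[OF inj1] card_image[OF inj2] cardO Os_def[symmetric] by simp
qed

section \<open>Evaluation of q1 after deleting edges\<close>

definition linkX :: "'d set \<Rightarrow> ('d \<Rightarrow> 'd) \<Rightarrow> ('d \<Rightarrow> 'b) \<Rightarrow> ('b \<times> 'b) set" where
  "linkX X a lab = {(lab x, lab (a x)) | x. x \<in> X}"

definition compsX :: "'d set \<Rightarrow> ('d \<Rightarrow> 'd) \<Rightarrow> ('d \<Rightarrow> 'b) \<Rightarrow> 'b set \<Rightarrow> 'b set set" where
  "compsX X a lab B = {{b'. (b, b') \<in> (linkX X a lab)\<^sup>*} | b. b \<in> B}"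

definition ecnt :: "'d set \<Rightarrow> ('d \<Rightarrow> 'd) \<Rightarrow> ('d \<Rightarrow> 'b) \<Rightarrow> 'b set \<Rightarrow> nat" where
  "ecnt X a lab K = card {{x, a x} | x. x \<in> X \<and> lab x \<in> K}"

definition EVt :: "real \<Rightarrow> nat list \<Rightarrow> nat \<Rightarrow> nat \<Rightarrow> nat \<Rightarrow> nat \<Rightarrow> real" where
  "EVt N ns e c f wt = N powi (int e - int c) *
     sum_list (map (\<lambda>n. real n powi (int f - int e + int c - int wt)) ns)"

definition EV :: "real \<Rightarrow> nat list \<Rightarrow> 'd set \<Rightarrow> ('d \<Rightarrow> 'd) \<Rightarrow> ('d \<Rightarrow> 'b) \<Rightarrow> ('b \<Rightarrow> nat) \<Rightarrow> 'b set
    \<Rightarrow> ('b set \<Rightarrow> nat) \<Rightarrow> real" where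
  "EV N ns X a lab w B f = (\<Prod>K\<in>compsX X a lab B. EVt N ns (ecnt X a lab K) (card K) (f K) (\<Sum>b\<in>K. w b))"

lemma comp_closed:
  assumes "K \<in> compsX X a lab B" "x \<in> X" "lab x \<in> K"
  shows "lab (a x) \<in> K"
proof -
  obtain b where K: "K = {b'. (b, b') \<in> (linkX X a lab)\<^sup>*}" using assms(1) unfolding compsX_def by auto
  have "(lab x, lab (a x)) \<in> linkX X a lab" using assms(2) unfolding linkX_def by auto
  thus ?thesis using assms(3) K by (auto intro: rtrancl_into_rtrancl)
qed

lemma comp_sub:
  assumes "K \<in> compsX X a lab B"
  shows "K \<subseteq> B \<union> lab ` a ` X"
proof
  fix c assume c: "c \<in> K"
  obtain b where b: "b \<in> B" "K = {b'. (b, b') \<in> (linkX X a lab)\<^sup>*}" using assms(1) unfolding compsX_def by auto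
  have "(b, c) \<in> (linkX X a lab)\<^sup>*" using c b by auto
  thus "c \<in> B \<union> lab ` a ` X"
  proof (cases rule: rtranclE)
    case base then show ?thesis using b by auto
  next
    case (step y) then show ?thesis unfolding linkX_def by auto
  qed
qed

lemma q1conn_EVt:
  "q1conn N ns P = EVt N ns (ne (prg P)) (card (blocksV P)) (nf (prg P)) (totV P)"
  unfolding q1conn_def EVt_def by simp

lemma psi_comp_inv:
  assumes "wf_pkg P" "closedR (prg P) R"
    "K \<in> compsX (rD (prg P) - R) (ralp (prg P)) (plv P) B"
  shows "(plv P (psiR (prg P) R y) \<in> K) = (plv P y \<in> K)"
proof -
  let ?G = "prg P"
  note w = wf_pkg_parts[OF assms(1)]
  have "plv P (psiR ?G R y) = plv P (aR ?G R y)" unfolding psiR_def by (rule w(2))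
  moreover have "(plv P (aR ?G R y) \<in> K) = (plv P y \<in> K)"
  proof (cases "y \<in> R")
    case True then show ?thesis by (simp add: aR_def)
  next
    case False
    show ?thesis
    proof (cases "y \<in> rD ?G")
      case False then show ?thesis using alp_out[OF w(1) False] \<open>y \<notin> R\<close> by (simp add: aR_def)
    next
      case True
      have ay: "ralp ?G y \<in> rD ?G - R" using True \<open>y \<notin> R\<close> alp_in[OF w(1)] alp_notR[OF w(1) assms(2)] by auto
      have "plv P y \<in> K \<Longrightarrow> plv P (ralp ?G y) \<in> K"
        using comp_closed[OF assms(3)] True \<open>y \<notin> R\<close> by auto
      moreover have "plv P (ralp ?G y) \<in> K \<Longrightarrow> plv P y \<in> K"
        using comp_closed[OF assms(3) ay] alp_alp[OF w(1), of y] by auto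
      ultimately show ?thesis using \<open>y \<notin> R\<close> by (auto simp: aR_def)
    qed
  qed
  ultimately show ?thesis by simp
qed

lemma setcompr_img: "{f x | x. x \<in> A} = f ` A"
  by blast

lemma setcompr_img2: "{f x | x. P x} = f ` {x. P x}"
  by blast

lemma q1_del:
  assumes P: "wf_pkg P" and R: "closedR (prg P) R"
  shows "q1 N ns (P\<lparr>prg := rg_del_edges (prg P) R\<rparr>) =
    EV N ns (rD (prg P) - R) (ralp (prg P)) (plv P) (pwv P) (blocksV P)
      (\<lambda>K. card {orb (psiR (prg P) R) y | y. y \<in> rD (prg P) \<and> plv P y \<in> K} +
           card {t \<in> rI (prg P). plv P t \<in> K})"
proof -
  let ?G = "prg P" let ?D = "rD ?G" let ?I = "rI ?G" let ?s = "rsig ?G" let ?a = "ralp ?G"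
  let ?lv = "plv P" let ?w = "pwv P" let ?G' = "rg_del_edges ?G R"
  define Q where "Q = P\<lparr>prg := ?G'\<rparr>"
  note w = wf_pkg_parts[OF P]
  note wp = wf_parts[OF w(1)]
  have RD: "R \<subseteq> ?D" using R by (simp add: closedR_def)
  define tk where "tk = (\<lambda>v. SOME x. x \<in> v) ` {v. \<exists>x\<in>?D. v = orb ?s x \<and> v \<subseteq> R}"
  have tkR: "tk \<subseteq> R" unfolding tk_def using tok_sub(2) by (intro image_subsetI)
  have rIQ: "rI ?G' = ?I \<union> tk" unfolding tk_def by simp
  have link: "linkV Q = linkX (?D - R) ?a ?lv"
  proof -
    have "linkV Q = (\<lambda>h. (?lv h, ?lv (ralp ?G' h))) ` rD ?G'"
      unfolding linkV_def Q_def by (simp add: setcompr_img del: del_simps)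
    also have "\<dots> = (\<lambda>h. (?lv h, ?lv (?a h))) ` (?D - R)" by (rule image_cong) auto
    finally show ?thesis unfolding linkX_def setcompr_img .
  qed
  have blocks: "blocksV Q = blocksV P"
    unfolding blocksV_def Q_def using blocks_del[OF P R] by simp
  have comps: "compsV Q = compsX (?D - R) ?a ?lv (blocksV P)"
    unfolding compsV_def compsX_def link blocks ..
  have "q1 N ns Q = (\<Prod>K\<in>compsX (?D - R) ?a ?lv (blocksV P). q1conn N ns (subV Q K))"
    unfolding q1_def comps ..
  also have "\<dots> = EV N ns (?D - R) ?a ?lv ?w (blocksV P)
      (\<lambda>K. card {orb (psiR ?G R) y | y. y \<in> ?D \<and> ?lv y \<in> K} + card {t \<in> ?I. ?lv t \<in> K})"
    unfolding EV_def
  proof (rule prod.cong[OF refl])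
    fix K assume K: "K \<in> compsX (?D - R) ?a ?lv (blocksV P)"
    define S where "S = {x. ?lv x \<in> K}"
    define Gr where "Gr = rg_restrict ?G' S"
    have sub: "subV Q K = Q\<lparr>prg := Gr\<rparr>" unfolding subV_def Q_def Gr_def S_def by simp
    have clK': "?lv (?a x) \<in> K" if "x \<in> ?D - R" "?lv x \<in> K" for x
      using comp_closed[OF K that] .
    have ne: "ne Gr = ecnt (?D - R) ?a ?lv K"
    proof -
      have "rg_edges Gr = (\<lambda>h. {h, ralp Gr h}) ` rD Gr" unfolding rg_edges_def by (rule setcompr_img)
      also have "\<dots> = (\<lambda>h. {h, ?a h}) ` {x. x \<in> ?D - R \<and> ?lv x \<in> K}"
        unfolding Gr_def S_def by (rule image_cong) auto
      finally show ?thesis unfolding ne_def ecnt_def setcompr_img2 by simp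
    qed
    have Ksub: "K \<subseteq> ?lv ` (rD ?G' \<union> rI ?G')"
    proof -
      have "K \<subseteq> blocksV P \<union> ?lv ` ?a ` (?D - R)" by (rule comp_sub[OF K])
      moreover have "?a ` (?D - R) \<subseteq> ?D" using alp_in[OF w(1)] by auto
      ultimately have "K \<subseteq> blocksV P" unfolding blocksV_def by blast
      thus ?thesis using blocks unfolding blocksV_def Q_def by simp
    qed
    have bl: "blocksV (subV Q K) = K"
    proof -
      have "blocksV (subV Q K) = blocksV (Q\<lparr>prg := Gr\<rparr>)" by (simp only: sub)
      also have "\<dots> = ?lv ` ((rD ?G' \<union> rI ?G') \<inter> S)"
        unfolding blocksV_def Gr_def Q_def by (simp add: Int_Un_distrib2 del: del_simps)
      also have "\<dots> = K"
      proof
        show "?lv ` ((rD ?G' \<union> rI ?G') \<inter> S) \<subseteq> K" unfolding S_def by auto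
        show "K \<subseteq> ?lv ` ((rD ?G' \<union> rI ?G') \<inter> S)"
        proof
          fix b assume "b \<in> K"
          then obtain x where "x \<in> rD ?G' \<union> rI ?G'" "b = ?lv x" using Ksub by blast
          thus "b \<in> ?lv ` ((rD ?G' \<union> rI ?G') \<inter> S)" using \<open>b \<in> K\<close> unfolding S_def by auto
        qed
      qed
      finally show ?thesis .
    qed
    have tot: "totV (subV Q K) = (\<Sum>b\<in>K. ?w b)"
      unfolding totV_def bl by (simp add: subV_def Q_def)
    let ?Qp = "\<lambda>y. ?lv y \<in> K"
    let ?psi = "psiR ?G R"
    have nf: "nf Gr = card {orb ?psi y | y. y \<in> ?D \<and> ?lv y \<in> K} + card {t \<in> ?I. ?lv t \<in> K}"
    proof -
      define F1 where "F1 = {orb (rg_phi Gr) x | x. x \<in> rD Gr}"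
      define F2 where "F2 = {{t} | t. t \<in> rI Gr}"
      have faces: "rg_faces Gr = F1 \<union> F2" unfolding rg_faces_def F1_def F2_def ..
      have rDGr: "rD Gr = {y. y \<in> ?D - R \<and> ?Qp y}" unfolding Gr_def S_def by auto
      have rIGr: "rI Gr = {t \<in> ?I. ?Qp t} \<union> {t \<in> tk. ?Qp t}" unfolding Gr_def S_def by (auto simp del: del_simps simp: rIQ)
      have finD: "finite ?D" by (rule wp(1))
      have fintk: "finite tk" by (rule finite_subset[OF _ finD]) (use tkR RD in auto)
      have finF1: "finite F1" unfolding F1_def setcompr_img
        by (rule finite_imageI) (simp add: rDGr finD)
      have finF2: "finite F2" unfolding F2_def setcompr_img rIGr
        by (rule finite_imageI) (simp add: wp(2) fintk)
      have disj: "F1 \<inter> F2 = {}"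
      proof (rule ccontr)
        assume "F1 \<inter> F2 \<noteq> {}"
        then obtain x t where x: "x \<in> rD Gr" "t \<in> rI Gr" "orb (rg_phi Gr) x = {t}"
          unfolding F1_def F2_def by auto
        hence "x = t" using orb_self[of x "rg_phi Gr"] by auto
        thus False using x rDGr rIGr wp(3) tkR by auto
      qed
      have cF2: "card F2 = card {t \<in> ?I. ?Qp t} + card {t \<in> tk. ?Qp t}"
      proof -
        have "card F2 = card (rI Gr)" unfolding F2_def setcompr_img
          by (rule card_image) (simp add: inj_on_def)
        also have "\<dots> = card {t \<in> ?I. ?Qp t} + card {t \<in> tk. ?Qp t}"
          unfolding rIGr
          by (rule card_Un_disjoint) (use wp(2) fintk wp(3) tkR RD in auto)
        finally show ?thesis .
      qed
      have Qinv: "?Qp (?psi y) = ?Qp y" for y by (rule psi_comp_inv[OF P R K])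
      have cnt: "card {orb (rg_phi Gr) y | y. y \<in> ?D - R \<and> ?Qp y} + card {t \<in> tk. ?Qp t} =
                 card {orb ?psi y | y. y \<in> ?D \<and> ?Qp y}"
        unfolding tk_def
      proof (rule count_orbits[where Q = ?Qp, OF psiR_permutes[OF w(1) R] wp(1) RD Qinv])
        fix u assume "u \<in> R" thus "?s u = ?psi u" by (simp add: psiR_def aR_def)
      next
        fix y assume y: "y \<in> ?D - R" "?Qp y"
        have ay: "?a y \<in> ?D - R" using y alp_in[OF w(1)] alp_notR[OF w(1) R] by auto
        have "rg_phi Gr y = skip ?s R (?a y)"
          using y ay clK' unfolding Gr_def S_def by (simp add: rg_phi_def)
        also have "\<dots> = skip ?psi R y"
        proof (rule skip_shift[symmetric])
          show "?psi y = ?s (?a y)" using y by (simp add: psiR_def aR_def)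
          show "?psi u = ?s u" if "u \<in> R" for u using that by (simp add: psiR_def aR_def)
          show "\<exists>k>0. (?s ^^ k) (?a y) \<notin> R"
            using skip_ex[OF wp(4) wp(1), of "?a y" R] ay by simp
        qed
        finally show "rg_phi Gr y = skip ?psi R y" .
      qed
      have "nf Gr = card F1 + card F2"
        unfolding nf_def faces by (rule card_Un_disjoint[OF finF1 finF2 disj])
      moreover have "F1 = {orb (rg_phi Gr) y | y. y \<in> ?D - R \<and> ?Qp y}" unfolding F1_def rDGr by simp
      ultimately show ?thesis using cF2 cnt by simp
    qed
    show "q1conn N ns (subV Q K) = EVt N ns (ecnt (?D - R) ?a ?lv K) (card K)
        (card {orb ?psi y | y. y \<in> ?D \<and> ?lv y \<in> K} + card {t \<in> ?I. ?lv t \<in> K}) (\<Sum>b\<in>K. ?w b)"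
      unfolding q1conn_EVt bl tot using ne nf by (simp add: sub)
  qed
  finally show ?thesis unfolding Q_def .
qed

section \<open>The combinatorial contraction identity\<close>

definition invol :: "'d set \<Rightarrow> ('d \<Rightarrow> 'd) \<Rightarrow> bool" where
  "invol X a \<longleftrightarrow> (\<forall>x\<in>X. a x \<in> X \<and> a (a x) = x \<and> a x \<noteq> x)"

lemma linkX_sym: "invol X a \<Longrightarrow> sym (linkX X a lab)"
proof (rule symI)
  fix b c assume inv: "invol X a" and "(b, c) \<in> linkX X a lab"
  then obtain x where x: "x \<in> X" "b = lab x" "c = lab (a x)" unfolding linkX_def by auto
  have "a x \<in> X" "a (a x) = x" using inv x(1) unfolding invol_def by auto
  thus "(c, b) \<in> linkX X a lab" unfolding linkX_def using x by (auto intro!: exI[of _ "a x"])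
qed

lemma class_eq:
  assumes "sym L" "(b, c) \<in> L\<^sup>*"
  shows "{x. (b, x) \<in> L\<^sup>*} = {x. (c, x) \<in> L\<^sup>*}"
proof -
  have "(c, b) \<in> L\<^sup>*" using sym_rtrancl[OF assms(1)] assms(2) unfolding sym_def by blast
  thus ?thesis using assms(2) by (auto intro: rtrancl_trans)
qed

lemma comp_mem_eq:
  assumes "invol X a" "K \<in> compsX X a lab B" "c \<in> K"
  shows "K = {x. (c, x) \<in> (linkX X a lab)\<^sup>*}"
proof -
  obtain b where b: "K = {x. (b, x) \<in> (linkX X a lab)\<^sup>*}" using assms(2) unfolding compsX_def by auto
  hence "(b, c) \<in> (linkX X a lab)\<^sup>*" using assms(3) by simp
  from class_eq[OF linkX_sym[OF assms(1)] this] show ?thesis using b by simp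
qed

definition rho :: "'b \<Rightarrow> 'b \<Rightarrow> 'b \<Rightarrow> 'b" where
  "rho a0 a1 b = (if b = a1 then a0 else b)"

lemma mrg_rho: "mrg lab h h' = (\<lambda>x. rho (lab h) (lab h') (lab x))"
  by (simp add: mrg_def rho_def fun_eq_iff)

lemma EV_contract:
  fixes N :: real
  assumes inv: "invol X a" and finX: "finite X" and hX: "h \<in> X" and finB: "finite B"
    and labX: "lab ` X \<subseteq> B" and N: "N \<noteq> 0"
    and ff: "\<And>K. K \<in> compsX X a lab B \<Longrightarrow> f' (rho (lab h) (lab (a h)) ` K) = f K"
  shows "EV N ns X a lab w B f =
    N powi (2 - int (card {lab h, lab (a h)})) *
    EV N ns (X - {h, a h}) a (mrg lab h (a h)) (mrgw lab w h (a h)) (rho (lab h) (lab (a h)) ` B) f'"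
proof -
  define a0 where "a0 = lab h"
  define a1 where "a1 = lab (a h)"
  define r where "r = rho a0 a1"
  define e where "e = {h, a h}"
  define L where "L = linkX X a lab"
  define L' where "L' = linkX (X - e) a (mrg lab h (a h))"
  define w' where "w' = mrgw lab w h (a h)"
  have mrg: "mrg lab h (a h) = (\<lambda>x. r (lab x))" unfolding r_def a0_def a1_def by (rule mrg_rho)
  have ah: "a h \<in> X" "a (a h) = h" "a h \<noteq> h" using inv hX unfolding invol_def by auto
  have symL: "sym L" unfolding L_def by (rule linkX_sym[OF inv])
  have a01: "(a0, a1) \<in> L" unfolding L_def linkX_def a0_def a1_def using hX by auto
  have a10: "(a1, a0) \<in> L" unfolding L_def linkX_def a0_def a1_def using ah by (auto intro!: exI[of _ "a h"])
  have req: "(b, c) \<in> L\<^sup>*" if "r b = r c" for b c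
  proof (cases "b = c")
    case False
    show ?thesis
    proof (cases "b = a1")
      case True
      hence "c = a0" using that False unfolding r_def rho_def by (auto split: if_splits)
      thus ?thesis using True a10 by auto
    next
      case False
      hence "c = a1 \<and> b = a0" using that \<open>b \<noteq> c\<close> unfolding r_def rho_def by (auto split: if_splits)
      thus ?thesis using a01 by auto
    qed
  qed simp
  have fwd: "(r b, r c) \<in> L'\<^sup>*" if "(b, c) \<in> L\<^sup>*" for b c
    using that
  proof (induct rule: rtrancl_induct)
    case (step y z)
    then obtain x where x: "x \<in> X" "y = lab x" "z = lab (a x)" unfolding L_def linkX_def by auto
    show ?case
    proof (cases "x \<in> e")
      case False
      hence "(r y, r z) \<in> L'" unfolding L'_def linkX_def mrg using x by auto
      thus ?thesis using step(3) by (simp add: rtrancl_into_rtrancl)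
    next
      case True
      hence "r y = r z" using x ah unfolding e_def r_def rho_def a0_def a1_def by auto
      thus ?thesis using step(3) by simp
    qed
  qed simp
  have bwd: "\<And>b c. r b = u \<Longrightarrow> r c = v \<Longrightarrow> (b, c) \<in> L\<^sup>*" if "(u, v) \<in> L'\<^sup>*" for u v
    using that
  proof (induct rule: rtrancl_induct)
    case base then show ?case using req by simp
  next
    case (step y z)
    obtain x where x: "x \<in> X - e" "y = r (lab x)" "z = r (lab (a x))"
      using step(2) unfolding L'_def linkX_def mrg by auto
    have "(b, lab x) \<in> L\<^sup>*" using step(3)[OF step(4)] x by simp
    moreover have "(lab x, lab (a x)) \<in> L" unfolding L_def linkX_def using x by auto
    moreover have "(lab (a x), c) \<in> L\<^sup>*" using req step(5) x by simp
    ultimately show ?case by (meson rtrancl_into_rtrancl rtrancl_trans)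
  qed
  define comps where "comps = compsX X a lab B"
  have compsL: "comps = {{x. (b, x) \<in> L\<^sup>*} | b. b \<in> B}" unfolding comps_def compsX_def L_def ..
  have finC: "finite comps" unfolding compsL setcompr_img by (rule finite_imageI[OF finB])
  have imgK: "r ` {x. (b, x) \<in> L\<^sup>*} = {x. (r b, x) \<in> L'\<^sup>*}" if "b \<in> B" for b
  proof
    show "r ` {x. (b, x) \<in> L\<^sup>*} \<subseteq> {x. (r b, x) \<in> L'\<^sup>*}" using fwd by auto
    show "{x. (r b, x) \<in> L'\<^sup>*} \<subseteq> r ` {x. (b, x) \<in> L\<^sup>*}"
    proof
      fix d assume "d \<in> {x. (r b, x) \<in> L'\<^sup>*}"
      hence d: "(r b, d) \<in> L'\<^sup>*" by simp
      thus "d \<in> r ` {x. (b, x) \<in> L\<^sup>*}"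
      proof (cases rule: rtranclE)
        case base then show ?thesis by auto
      next
        case (step y)
        then obtain x where x: "x \<in> X - e" "d = r (lab (a x))" unfolding L'_def linkX_def mrg by auto
        have "(b, lab (a x)) \<in> L\<^sup>*" using bwd[OF d refl] x by simp
        thus ?thesis using x by auto
      qed
    qed
  qed
  have comps': "compsX (X - e) a (mrg lab h (a h)) (r ` B) = (\<lambda>K. r ` K) ` comps"
  proof -
    have "compsX (X - e) a (mrg lab h (a h)) (r ` B) = {{x. (u, x) \<in> L'\<^sup>*} | u. u \<in> r ` B}"
      unfolding compsX_def L'_def ..
    also have "\<dots> = (\<lambda>b. {x. (r b, x) \<in> L'\<^sup>*}) ` B" by auto
    also have "\<dots> = (\<lambda>b. r ` {x. (b, x) \<in> L\<^sup>*}) ` B" using imgK by (intro image_cong) auto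
    also have "\<dots> = (\<lambda>K. r ` K) ` comps" unfolding compsL by auto
    finally show ?thesis .
  qed
  have Kmem: "K = {x. (c, x) \<in> L\<^sup>*}" if "K \<in> comps" "c \<in> K" for K c
    using comp_mem_eq[OF inv, of K lab B c] that unfolding comps_def L_def by simp
  have sat: "(r c \<in> r ` K) = (c \<in> K)" if "K \<in> comps" for K c
  proof
    assume "r c \<in> r ` K"
    then obtain k where k: "k \<in> K" "r c = r k" by auto
    have "(k, c) \<in> L\<^sup>*" using req k by metis
    thus "c \<in> K" using Kmem[OF that k(1)] by auto
  qed auto
  have injr: "inj_on (\<lambda>K. r ` K) comps"
  proof
    fix K1 K2 assume K1: "K1 \<in> comps" and K2: "K2 \<in> comps" and eq: "r ` K1 = r ` K2"
    obtain b where b: "b \<in> B" "K1 = {x. (b, x) \<in> L\<^sup>*}" using K1 unfolding compsL by auto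
    have "b \<in> K1" using b by auto
    hence "r b \<in> r ` K2" using eq by auto
    hence "b \<in> K2" using sat[OF K2] by simp
    thus "K1 = K2" using Kmem[OF K2] b by simp
  qed
  define K0 where "K0 = {x. (a0, x) \<in> L\<^sup>*}"
  have a0B: "a0 \<in> B" using labX hX unfolding a0_def by auto
  have K0C: "K0 \<in> comps" unfolding compsL K0_def using a0B by auto
  have a0K: "a0 \<in> K0" "a1 \<in> K0" unfolding K0_def using a01 by auto
  have Ksub: "K \<subseteq> B" if "K \<in> comps" for K
  proof -
    have "K \<subseteq> B \<union> lab ` a ` X" using comp_sub that unfolding comps_def by blast
    moreover have "lab ` a ` X \<subseteq> B" using labX inv unfolding invol_def by auto
    ultimately show ?thesis by auto
  qed
  have finK: "finite K" if "K \<in> comps" for K using Ksub[OF that] finB finite_subset by auto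
  define T where "T = (\<lambda>K. EVt N ns (ecnt X a lab K) (card K) (f K) (\<Sum>b\<in>K. w b))"
  define T' where "T' = (\<lambda>K. EVt N ns (ecnt (X - e) a (mrg lab h (a h)) K) (card K) (f' K) (\<Sum>b\<in>K. w' b))"
  have EV1: "EV N ns X a lab w B f = (\<Prod>K\<in>comps. T K)" unfolding EV_def comps_def T_def ..
  have EV2: "EV N ns (X - e) a (mrg lab h (a h)) w' (r ` B) f' = (\<Prod>K\<in>comps. T' (r ` K))"
    unfolding EV_def comps' T'_def[symmetric] by (rule prod.reindex[OF injr, unfolded comp_def])
  have ecnt_eq: "{x. x \<in> X - e \<and> mrg lab h (a h) x \<in> r ` K} = {x. x \<in> X \<and> lab x \<in> K} - e"
    if "K \<in> comps" for K using sat[OF that] unfolding mrg by auto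
  have other: "T K = T' (r ` K)" if K: "K \<in> comps" "K \<noteq> K0" for K
  proof -
    have na0: "a0 \<notin> K" using Kmem[OF K(1)] K(2) unfolding K0_def by auto
    have na1: "a1 \<notin> K"
    proof
      assume "a1 \<in> K"
      hence "r a1 \<in> r ` K" by simp
      moreover have "r a1 = r a0" unfolding r_def rho_def by simp
      ultimately have "a0 \<in> K" using sat[OF K(1)] by simp
      thus False using na0 by simp
    qed
    have rK: "r ` K = K"
    proof -
      have "r c = c" if "c \<in> K" for c using that na1 unfolding r_def rho_def by auto
      thus ?thesis by force
    qed
    have "{x. x \<in> X \<and> lab x \<in> K} - e = {x. x \<in> X \<and> lab x \<in> K}"
      using na0 na1 ah unfolding e_def a0_def a1_def by auto
    hence ec: "ecnt (X - e) a (mrg lab h (a h)) (r ` K) = ecnt X a lab K"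
      unfolding ecnt_def using ecnt_eq[OF K(1)] by (simp add: setcompr_img2)
    have ws: "(\<Sum>b\<in>K. w' b) = (\<Sum>b\<in>K. w b)"
      using na0 unfolding w'_def mrgw_def a0_def by (intro sum.cong) auto
    have fK: "f' K = f K" using ff[OF K(1)[unfolded comps_def]] rK unfolding r_def a0_def a1_def by simp
    have ec': "ecnt (X - e) a (mrg lab h (a h)) K = ecnt X a lab K" using ec rK by simp
    show ?thesis unfolding rK unfolding T_def T'_def ec' fK ws ..
  qed
  have main: "T K0 = N powi (2 - int (card {a0, a1})) * T' (r ` K0)"
  proof -
    define E where "E = {{x, a x} | x. x \<in> X \<and> lab x \<in> K0}"
    have eE: "e \<in> E" unfolding E_def e_def using hX a0K unfolding a0_def by auto
    have finE: "finite E" unfolding E_def setcompr_img2 by (rule finite_imageI) (use finX in auto)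
    have "{{x, a x} | x. x \<in> X - e \<and> mrg lab h (a h) x \<in> r ` K0} =
        (\<lambda>x. {x, a x}) ` {x. x \<in> X - e \<and> mrg lab h (a h) x \<in> r ` K0}" by (rule setcompr_img2)
    also have "\<dots> = (\<lambda>x. {x, a x}) ` ({x. x \<in> X \<and> lab x \<in> K0} - e)" by (simp only: ecnt_eq[OF K0C])
    also have "\<dots> = E - {e}"
    proof -
      have "{x, a x} = e \<longleftrightarrow> x \<in> e" if "x \<in> X" for x
        using ah that unfolding e_def by (auto simp: doubleton_eq_iff)
      thus ?thesis unfolding E_def setcompr_img2 by auto
    qed
    finally have ec: "ecnt (X - e) a (mrg lab h (a h)) (r ` K0) = ecnt X a lab K0 - 1"
      unfolding ecnt_def E_def[symmetric] using eE finE by simp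
    have Epos: "ecnt X a lab K0 \<ge> 1" unfolding ecnt_def E_def[symmetric]
      using eE finE by (metis One_nat_def Suc_leI card_gt_0_iff empty_iff)
    have finK0: "finite K0" by (rule finK[OF K0C])
    show ?thesis
    proof (cases "a0 = a1")
      case True
      have rid: "r c = c" for c unfolding r_def rho_def using True by auto
      have rK: "r ` K0 = K0" using rid by simp
      have ws: "(\<Sum>b\<in>K0. w' b) = (\<Sum>b\<in>K0. w b) + 1"
      proof -
        have "(\<Sum>b\<in>K0. w' b) = w' a0 + (\<Sum>b\<in>K0 - {a0}. w' b)" using sum.remove[OF finK0 a0K(1)] by simp
        also have "(\<Sum>b\<in>K0 - {a0}. w' b) = (\<Sum>b\<in>K0 - {a0}. w b)"
          unfolding w'_def mrgw_def a0_def by (intro sum.cong) auto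
        also have "w' a0 = w a0 + 1" unfolding w'_def mrgw_def using True unfolding a0_def a1_def by simp
        finally show ?thesis using sum.remove[OF finK0 a0K(1), of w] by simp
      qed
      have c1: "card {a0, a1} = 1" using True by simp
      have ec0: "ecnt (X - e) a (mrg lab h (a h)) K0 = ecnt X a lab K0 - 1" using ec rK by simp
      have fK0: "f' K0 = f K0" using ff[OF K0C[unfolded comps_def]] rK unfolding r_def a0_def a1_def by simp
      define E0 where "E0 = ecnt X a lab K0"
      have pw: "N powi (int E0 - int (card K0)) = N powi 1 * N powi (int (E0 - 1) - int (card K0))"
      proof -
        have eq: "int E0 - int (card K0) = 1 + (int (E0 - 1) - int (card K0))"
          using Epos unfolding E0_def[symmetric] by simp
        show ?thesis unfolding eq by (rule power_int_add) (simp add: N)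
      qed
      show ?thesis unfolding T_def T'_def rK ec0 fK0 c1 ws EVt_def E0_def[symmetric] pw
        using Epos unfolding E0_def[symmetric] by (simp add: of_nat_diff algebra_simps)
    next
      case False
      have rK: "r ` K0 = K0 - {a1}"
      proof
        show "r ` K0 \<subseteq> K0 - {a1}" using a0K False unfolding r_def rho_def by auto
        show "K0 - {a1} \<subseteq> r ` K0"
        proof
          fix c assume "c \<in> K0 - {a1}"
          hence "r c = c" "c \<in> K0" unfolding r_def rho_def by auto
          thus "c \<in> r ` K0" by (metis imageI)
        qed
      qed
      have cK: "card (r ` K0) = card K0 - 1" "card K0 \<ge> 2"
      proof -
        show "card (r ` K0) = card K0 - 1" unfolding rK using finK0 a0K by simp
        have "{a0, a1} \<subseteq> K0" using a0K by auto
        hence "card {a0, a1} \<le> card K0" using finK0 by (rule card_mono[rotated])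
        thus "card K0 \<ge> 2" using False by simp
      qed
      have ws: "(\<Sum>b\<in>r ` K0. w' b) = (\<Sum>b\<in>K0. w b)"
      proof -
        have a0in: "a0 \<in> K0 - {a1}" using a0K False by auto
        have "(\<Sum>b\<in>K0 - {a1}. w' b) = w' a0 + (\<Sum>b\<in>K0 - {a1} - {a0}. w' b)"
          using sum.remove[OF _ a0in] finK0 by simp
        also have "(\<Sum>b\<in>K0 - {a1} - {a0}. w' b) = (\<Sum>b\<in>K0 - {a1} - {a0}. w b)"
          unfolding w'_def mrgw_def a0_def by (intro sum.cong) auto
        also have "w' a0 = w a0 + w a1" unfolding w'_def mrgw_def using False unfolding a0_def a1_def by simp
        also have "(\<Sum>b\<in>K0. w b) = w a1 + (\<Sum>b\<in>K0 - {a1}. w b)" using sum.remove[OF finK0 a0K(2)] by simp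
        moreover have "(\<Sum>b\<in>K0 - {a1}. w b) = w a0 + (\<Sum>b\<in>K0 - {a1} - {a0}. w b)"
          using sum.remove[OF _ a0in] finK0 by simp
        ultimately show ?thesis unfolding rK by simp
      qed
      have c2: "card {a0, a1} = 2" using False by simp
      have fK: "f' (r ` K0) = f K0" using ff[OF K0C[unfolded comps_def]] unfolding r_def a0_def a1_def .
      show ?thesis unfolding T_def T'_def ec fK ws c2 cK(1)
        using Epos cK(2) by (simp add: EVt_def of_nat_diff algebra_simps)
    qed
  qed
  have "(\<Prod>K\<in>comps. T K) = T K0 * (\<Prod>K\<in>comps - {K0}. T K)"
    using prod.remove[OF finC K0C] .
  also have "(\<Prod>K\<in>comps - {K0}. T K) = (\<Prod>K\<in>comps - {K0}. T' (r ` K))"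
    using other by (intro prod.cong) auto
  also have "T K0 * \<dots> = N powi (2 - int (card {a0, a1})) * (T' (r ` K0) * (\<Prod>K\<in>comps - {K0}. T' (r ` K)))"
    unfolding main by simp
  also have "T' (r ` K0) * (\<Prod>K\<in>comps - {K0}. T' (r ` K)) = (\<Prod>K\<in>comps. T' (r ` K))"
    using prod.remove[OF finC K0C, of "\<lambda>K. T' (r ` K)"] by simp
  finally have fin: "(\<Prod>K\<in>comps. T K) = N powi (2 - int (card {a0, a1})) * (\<Prod>K\<in>comps. T' (r ` K))" .
  show ?thesis unfolding EV1 e_def[symmetric] fin EV2[unfolded w'_def, symmetric] unfolding r_def a0_def a1_def ..
qed

section \<open>Deletion and contraction of one edge inside q1\<close>

lemma EV_cong:
  assumes "\<And>x. x \<in> X \<Longrightarrow> a x = a' x" "\<And>K. K \<in> compsX X a lab B \<Longrightarrow> f K = f' K"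
  shows "EV N ns X a lab w B f = EV N ns X a' lab w B f'"
proof -
  have l: "linkX X a lab = linkX X a' lab" unfolding linkX_def using assms(1) by force
  have c: "compsX X a lab B = compsX X a' lab B" unfolding compsX_def l ..
  have e: "ecnt X a lab K = ecnt X a' lab K" for K
  proof -
    have "{{x, a x} | x. x \<in> X \<and> lab x \<in> K} = {{x, a' x} | x. x \<in> X \<and> lab x \<in> K}"
      using assms(1) by force
    thus ?thesis unfolding ecnt_def by simp
  qed
  show ?thesis unfolding EV_def c[symmetric] e using assms(2) by (intro prod.cong) auto
qed

lemma card_split_tok:
  assumes "finite I" "finite T" "I \<inter> T = {}"
  shows "card {t \<in> I \<union> T. Q t} = card {t \<in> I. Q t} + card {t \<in> T. Q t}"
proof -
  have "{t \<in> I \<union> T. Q t} = {t \<in> I. Q t} \<union> {t \<in> T. Q t}" by auto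
  thus ?thesis using assms by (simp add: card_Un_disjoint disjoint_iff)
qed

lemma tok_finite:
  assumes "finite D"
  shows "finite ((\<lambda>v. SOME x. x \<in> v) ` {v. \<exists>x\<in>D. v = orb p x \<and> v \<subseteq> R})"
  by (rule finite_imageI, rule finite_subset[of _ "orb p ` D"]) (use assms in auto)

lemma tok_subR:
  "(\<lambda>v. SOME x. x \<in> v) ` {v. \<exists>x\<in>D. v = orb p x \<and> v \<subseteq> R} \<subseteq> R"
proof
  fix t assume "t \<in> (\<lambda>v. SOME x. x \<in> v) ` {v. \<exists>x\<in>D. v = orb p x \<and> v \<subseteq> R}"
  then obtain x where x: "orb p x \<subseteq> R" "t = (SOME y. y \<in> orb p x)" by auto
  have "t \<in> orb p x" using x(2) SOME_in[OF orb_self] by simp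
  thus "t \<in> R" using x(1) by auto
qed

lemma q1_delete_step:
  assumes P: "wf_pkg P" and h: "h \<in> rD (prg P)"
    and R': "closedR (rg_del_edges (prg P) {h, ralp (prg P) h}) R'"
  shows "q1 N ns ((pdelete P h)\<lparr>prg := rg_del_edges (prg (pdelete P h)) R'\<rparr>) =
         q1 N ns (P\<lparr>prg := rg_del_edges (prg P) ({h, ralp (prg P) h} \<union> R')\<rparr>)"
proof -
  let ?G = "prg P" let ?D = "rD ?G" let ?I = "rI ?G" let ?s = "rsig ?G" let ?a = "ralp ?G"
  let ?lv = "plv P" let ?e = "{h, ?a h}" let ?G1 = "rg_del_edges ?G ?e"
  define P1 where "P1 = pdelete P h"
  note w = wf_pkg_parts[OF P]
  note wp = wf_parts[OF w(1)]
  have cle: "closedR ?G ?e" by (rule edge_closed[OF w(1) h])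
  have eD: "?e \<subseteq> ?D" using cle by (simp add: closedR_def)
  have R'D: "R' \<subseteq> ?D - ?e" using R' by (simp add: closedR_def)
  have cl: "closedR ?G (?e \<union> R')"
    unfolding closedR_def
  proof (intro conjI ballI)
    show "?e \<union> R' \<subseteq> ?D" using eD R'D by auto
    fix x assume x: "x \<in> ?e \<union> R'"
    show "?a x \<in> ?e \<union> R'"
    proof (cases "x \<in> ?e")
      case True then show ?thesis using cle unfolding closedR_def by auto
    next
      case False
      hence xR: "x \<in> R'" using x by auto
      hence "ralp ?G1 x \<in> R'" using R' unfolding closedR_def by blast
      moreover have "ralp ?G1 x = ?a x" using xR R'D by auto
      ultimately show ?thesis by simp
    qed
  qed
  have P1w: "wf_pkg P1" unfolding P1_def by (rule wf_pkg_delete[OF P h])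
  have prg1: "prg P1 = ?G1" unfolding P1_def by simp
  have R1: "closedR (prg P1) R'" using R' prg1 by simp
  have lhs: "q1 N ns (P1\<lparr>prg := rg_del_edges (prg P1) R'\<rparr>) =
    EV N ns (?D - ?e - R') (ralp ?G1) ?lv (pwv P) (blocksV P1)
      (\<lambda>K. card {orb (psiR ?G1 R') y | y. y \<in> ?D - ?e \<and> ?lv y \<in> K} + card {t \<in> rI ?G1. ?lv t \<in> K})"
    using q1_del[OF P1w R1] unfolding prg1 by (simp add: P1_def del: del_simps) (simp add: P1_def)
  have rhs: "q1 N ns (P\<lparr>prg := rg_del_edges ?G (?e \<union> R')\<rparr>) =
    EV N ns (?D - (?e \<union> R')) ?a ?lv (pwv P) (blocksV P)
      (\<lambda>K. card {orb (psiR ?G (?e \<union> R')) y | y. y \<in> ?D \<and> ?lv y \<in> K} + card {t \<in> ?I. ?lv t \<in> K})"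
    by (rule q1_del[OF P cl])
  have bl: "blocksV P1 = blocksV P"
    unfolding blocksV_def using blocks_del[OF P cle] by (simp add: P1_def)
  have XX: "?D - ?e - R' = ?D - (?e \<union> R')" by auto
  show ?thesis
    unfolding P1_def[symmetric] lhs rhs bl XX
  proof (rule EV_cong)
    fix x assume "x \<in> ?D - (?e \<union> R')" thus "ralp ?G1 x = ?a x" by simp
  next
    fix K assume K: "K \<in> compsX (?D - (?e \<union> R')) (ralp ?G1) ?lv (blocksV P)"
    have K': "K \<in> compsX (?D - (?e \<union> R')) ?a ?lv (blocksV P)"
    proof -
      have "linkX (?D - (?e \<union> R')) (ralp ?G1) ?lv = linkX (?D - (?e \<union> R')) ?a ?lv"
        unfolding linkX_def by auto
      thus ?thesis using K unfolding compsX_def by simp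
    qed
    let ?Q = "\<lambda>y. ?lv y \<in> K"
    let ?psi = "psiR ?G (?e \<union> R')"
    define tk where "tk = (\<lambda>v. SOME x. x \<in> v) ` {v. \<exists>x\<in>?D. v = orb ?s x \<and> v \<subseteq> ?e}"
    have rI1: "rI ?G1 = ?I \<union> tk" unfolding tk_def by simp
    have Qinv: "?Q (?psi y) = ?Q y" for y by (rule psi_comp_inv[OF P cl K'])
    have cnt: "card {orb (psiR ?G1 R') y | y. y \<in> ?D - ?e \<and> ?Q y} + card {t \<in> tk. ?Q t} =
               card {orb ?psi y | y. y \<in> ?D \<and> ?Q y}"
      unfolding tk_def
    proof (rule count_orbits[where Q = ?Q, OF psiR_permutes[OF w(1) cl] wp(1) eD Qinv])
      fix u assume "u \<in> ?e" thus "?s u = ?psi u" unfolding psiR_def aR_def by auto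
    next
      fix y assume y: "y \<in> ?D - ?e" "?Q y"
      define z where "z = (if y \<in> R' then y else ?a y)"
      have z: "z \<in> ?D - ?e" using y alp_in[OF w(1)] alp_notR[OF w(1) cle] unfolding z_def by auto
      have "psiR ?G1 R' y = skip ?s ?e z"
        using y z unfolding psiR_def aR_def z_def by auto
      also have "\<dots> = skip ?psi ?e y"
      proof (rule skip_shift[symmetric])
        show "?psi y = ?s z" using y unfolding psiR_def aR_def z_def by auto
        show "?psi u = ?s u" if "u \<in> ?e" for u using that unfolding psiR_def aR_def by auto
        show "\<exists>k>0. (?s ^^ k) z \<notin> ?e" using skip_ex[OF wp(4) wp(1), of z ?e] z by simp
      qed
      finally show "psiR ?G1 R' y = skip ?psi ?e y" .
    qed
    have split: "card {t \<in> ?I \<union> tk. ?Q t} = card {t \<in> ?I. ?Q t} + card {t \<in> tk. ?Q t}"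
    proof (rule card_split_tok)
      have tkD: "tk \<subseteq> ?D" using tok_subR[of ?D ?s ?e] eD unfolding tk_def by blast
      show "finite ?I" by (rule wp(2))
      show "finite tk" unfolding tk_def by (rule tok_finite[OF wp(1)])
      show "?I \<inter> tk = {}" using wp(3) tkD by blast
    qed
    show "card {orb (psiR ?G1 R') y | y. y \<in> ?D - ?e \<and> ?lv y \<in> K} + card {t \<in> rI ?G1. ?lv t \<in> K} =
          card {orb ?psi y | y. y \<in> ?D \<and> ?lv y \<in> K} + card {t \<in> ?I. ?lv t \<in> K}"
      unfolding rI1 split using cnt by simp
  qed
qed


lemma rho_sat:
  assumes "(a0 \<in> K) = (a1 \<in> K)"
  shows "(rho a0 a1 c \<in> rho a0 a1 ` K) = (c \<in> K)"
proof
  assume "rho a0 a1 c \<in> rho a0 a1 ` K"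
  then obtain k where k: "k \<in> K" "rho a0 a1 c = rho a0 a1 k" by auto
  show "c \<in> K"
  proof (cases "c = k")
    case False
    hence "(c = a1 \<and> k = a0) \<or> (c = a0 \<and> k = a1)" using k(2) unfolding rho_def by (auto split: if_splits)
    thus ?thesis using k(1) assms by auto
  qed (use k in simp)
qed auto

lemma con_simps:
  "rD (rg_con_edges G R) = rD G - R"
  "ralp (rg_con_edges G R) = (\<lambda>x. if x \<in> rD G - R then ralp G x else x)"
  "rI (rg_con_edges G R) = rI G \<union> (\<lambda>v. SOME x. x \<in> v) ` {v. \<exists>x\<in>rD G. v = orb (rg_phi G) x \<and> v \<subseteq> R}"
  "rsig (rg_con_edges G R) = rg_phi (rg_del_edges (rg_dual G) R)"
  by (simp_all add: rg_con_edges_def fun_eq_iff)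

lemma blocks_con:
  assumes P: "wf_pkg P" and h: "h \<in> rD (prg P)"
  shows "blocksV (pcontract P h) = rho (plv P h) (plv P (ralp (prg P) h)) ` blocksV P"
proof -
  let ?G = "prg P" let ?D = "rD ?G" let ?I = "rI ?G" let ?s = "rsig ?G" let ?a = "ralp ?G"
  let ?lv = "plv P" let ?h' = "?a h" let ?e = "{h, ?h'}"
  let ?r = "rho (?lv h) (?lv ?h')"
  note w = wf_pkg_parts[OF P]
  define tk where "tk = (\<lambda>v. SOME x. x \<in> v) ` {v. \<exists>x\<in>?D. v = orb (rg_phi ?G) x \<and> v \<subseteq> ?e}"
  have cle: "closedR ?G ?e" by (rule edge_closed[OF w(1) h])
  have eD: "?e \<subseteq> ?D" using cle by (simp add: closedR_def)
  have tke: "tk \<subseteq> ?e" unfolding tk_def by (rule tok_subR)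
  have bc: "blocksV (pcontract P h) = ?r ` ?lv ` ((?D - ?e) \<union> (?I \<union> tk))"
    unfolding blocksV_def pcontract_simps mrg_rho con_simps tk_def by (simp add: image_image)
  have h'D: "?h' \<in> ?D" by (rule alp_in[OF w(1) h])
  have hh: "?a ?h' = h" by (rule alp_alp[OF w(1)])
  have key: "\<exists>y \<in> (?D - ?e) \<union> (?I \<union> tk). ?r (?lv y) = ?r (?lv h)"
  proof (cases "?s h \<in> ?e")
    case False
    hence "?s h \<in> ?D - ?e" using sig_in[OF w(1) h] by auto
    thus ?thesis using w(2)[of h] by (intro bexI[of _ "?s h"]) auto
  next
    case T1: True
    show ?thesis
    proof (cases "?s ?h' \<in> ?e")
      case False
      hence "?s ?h' \<in> ?D - ?e" using sig_in[OF w(1) h'D] by auto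
      moreover have "?r (?lv (?s ?h')) = ?r (?lv h)" using w(2)[of ?h'] unfolding rho_def by auto
      ultimately show ?thesis by blast
    next
      case T2: True
      have phie: "rg_phi ?G u \<in> ?e" if "u \<in> ?e" for u
        using that T1 T2 hh unfolding rg_phi_def by auto
      have "((rg_phi ?G) ^^ k) h \<in> ?e" for k by (induct k) (use phie in auto)
      hence sub: "orb (rg_phi ?G) h \<subseteq> ?e" unfolding orb_def by auto
      define t where "t = (SOME x. x \<in> orb (rg_phi ?G) h)"
      have "t \<in> orb (rg_phi ?G) h" unfolding t_def by (rule SOME_in[OF orb_self])
      hence te: "t \<in> ?e" using sub by auto
      have "t \<in> tk" unfolding tk_def t_def using sub h by auto
      moreover have "?r (?lv t) = ?r (?lv h)" using te unfolding rho_def by auto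
      ultimately show ?thesis by blast
    qed
  qed
  show ?thesis
    unfolding bc unfolding blocksV_def
  proof (rule equalityI)
    show "?r ` ?lv ` ((?D - ?e) \<union> (?I \<union> tk)) \<subseteq> ?r ` ?lv ` (?D \<union> ?I)" using tke eD by auto
    show "?r ` ?lv ` (?D \<union> ?I) \<subseteq> ?r ` ?lv ` ((?D - ?e) \<union> (?I \<union> tk))"
    proof
      fix b assume "b \<in> ?r ` ?lv ` (?D \<union> ?I)"
      then obtain x where x: "x \<in> ?D \<union> ?I" "b = ?r (?lv x)" by auto
      show "b \<in> ?r ` ?lv ` ((?D - ?e) \<union> (?I \<union> tk))"
      proof (cases "x \<in> ?e")
        case False then show ?thesis using x by auto
      next
        case True
        hence "?r (?lv x) = ?r (?lv h)" unfolding rho_def by auto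
        then obtain y where "y \<in> (?D - ?e) \<union> (?I \<union> tk)" "?r (?lv y) = b" using key x by auto
        thus ?thesis by auto
      qed
    qed
  qed
qed


lemma q1_contract_step:
  assumes P: "wf_pkg P" and h: "h \<in> rD (prg P)" and N: "N \<noteq> 0"
    and R': "closedR (rg_con_edges (prg P) {h, ralp (prg P) h}) R'"
  shows "q1 N ns (P\<lparr>prg := rg_del_edges (prg P) R'\<rparr>) =
    N powi (2 - int (mu P h)) * q1 N ns ((pcontract P h)\<lparr>prg := rg_del_edges (prg (pcontract P h)) R'\<rparr>)"
proof -
  let ?G = "prg P" let ?D = "rD ?G" let ?I = "rI ?G" let ?s = "rsig ?G" let ?a = "ralp ?G"
  let ?lv = "plv P" let ?h' = "?a h" let ?e = "{h, ?h'}"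
  let ?r = "rho (?lv h) (?lv ?h')"
  let ?Gc = "rg_con_edges ?G ?e"
  define Pc where "Pc = pcontract P h"
  note w = wf_pkg_parts[OF P]
  note wp = wf_parts[OF w(1)]
  have cle: "closedR ?G ?e" by (rule edge_closed[OF w(1) h])
  have eD: "?e \<subseteq> ?D" using cle by (simp add: closedR_def)
  have R'D: "R' \<subseteq> ?D - ?e" using R' by (simp add: closedR_def con_simps)
  have clR: "closedR ?G R'"
    unfolding closedR_def
  proof (intro conjI ballI)
    show "R' \<subseteq> ?D" using R'D by auto
    fix x assume xR: "x \<in> R'"
    hence "ralp ?Gc x \<in> R'" using R' unfolding closedR_def by blast
    moreover have "ralp ?Gc x = ?a x" using xR R'D by (auto simp: con_simps)
    ultimately show "?a x \<in> R'" by simp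
  qed
  have hR: "h \<notin> R'" "?h' \<notin> R'" using R'D by auto
  have hX: "h \<in> ?D - R'" using h hR by auto
  have Pcw: "wf_pkg Pc" unfolding Pc_def by (rule wf_pkg_contract[OF P h])
  have prgc: "prg Pc = ?Gc" unfolding Pc_def by simp
  have R'c: "closedR (prg Pc) R'" using R' prgc by simp
  have rhs: "q1 N ns (Pc\<lparr>prg := rg_del_edges (prg Pc) R'\<rparr>) =
    EV N ns (rD ?Gc - R') (ralp ?Gc) (plv Pc) (pwv Pc) (blocksV Pc)
      (\<lambda>K. card {orb (psiR ?Gc R') y | y. y \<in> rD ?Gc \<and> plv Pc y \<in> K} + card {t \<in> rI ?Gc. plv Pc t \<in> K})"
    using q1_del[OF Pcw R'c] unfolding prgc .
  have lhs: "q1 N ns (P\<lparr>prg := rg_del_edges ?G R'\<rparr>) =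
    EV N ns (?D - R') ?a ?lv (pwv P) (blocksV P)
      (\<lambda>K. card {orb (psiR ?G R') y | y. y \<in> ?D \<and> ?lv y \<in> K} + card {t \<in> ?I. ?lv t \<in> K})"
    by (rule q1_del[OF P clR])
  have inv: "invol (?D - R') ?a" unfolding invol_def
    using alp_in[OF w(1)] alp_notR[OF w(1) clR] alp_alp[OF w(1)] wp(7) by auto
  have finB: "finite (blocksV P)" unfolding blocksV_def using wp(1) wp(2) by simp
  have labX: "?lv ` (?D - R') \<subseteq> blocksV P" unfolding blocksV_def by auto
  define fc where "fc = (\<lambda>K. card {orb (psiR ?Gc R') y | y. y \<in> rD ?Gc \<and> plv Pc y \<in> K} + card {t \<in> rI ?Gc. plv Pc t \<in> K})"
  have step: "EV N ns (?D - R') ?a ?lv (pwv P) (blocksV P)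
      (\<lambda>K. card {orb (psiR ?G R') y | y. y \<in> ?D \<and> ?lv y \<in> K} + card {t \<in> ?I. ?lv t \<in> K}) =
    N powi (2 - int (card {?lv h, ?lv ?h'})) *
    EV N ns (?D - R' - ?e) ?a (mrg ?lv h ?h') (mrgw ?lv (pwv P) h ?h') (?r ` blocksV P) fc"
  proof (rule EV_contract[OF inv _ hX finB labX N])
    show "finite (?D - R')" using wp(1) by simp
    fix K assume K: "K \<in> compsX (?D - R') ?a ?lv (blocksV P)"
    have satK: "(?lv h \<in> K) = (?lv ?h' \<in> K)"
    proof
      assume "?lv h \<in> K" thus "?lv ?h' \<in> K" using comp_closed[OF K hX] by simp
    next
      assume "?lv ?h' \<in> K"
      have h'X: "?h' \<in> ?D - R'" using alp_in[OF w(1) h] hR by auto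
      show "?lv h \<in> K" using comp_closed[OF K h'X \<open>?lv ?h' \<in> K\<close>] alp_alp[OF w(1), of h] by simp
    qed
    have plvc: "plv Pc y \<in> ?r ` K \<longleftrightarrow> ?lv y \<in> K" for y
      unfolding Pc_def pcontract_simps mrg_rho by (rule rho_sat[OF satK])
    let ?Q = "\<lambda>y. ?lv y \<in> K"
    let ?psi = "psiR ?G R'"
    let ?phi = "rg_phi ?G"
    define tk where "tk = (\<lambda>v. SOME x. x \<in> v) ` {v. \<exists>x\<in>?D. v = orb ?phi x \<and> v \<subseteq> ?e}"
    have rIc: "rI ?Gc = ?I \<union> tk" unfolding tk_def con_simps ..
    have Qinv: "?Q (?psi y) = ?Q y" for y by (rule psi_comp_inv[OF P clR K])
    have cnt: "card {orb (psiR ?Gc R') y | y. y \<in> ?D - ?e \<and> ?Q y} + card {t \<in> tk. ?Q t} =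
               card {orb ?psi y | y. y \<in> ?D \<and> ?Q y}"
      unfolding tk_def
    proof (rule count_orbits[where Q = ?Q, OF psiR_permutes[OF w(1) clR] wp(1) eD Qinv])
      fix u assume u: "u \<in> ?e"
      hence "u \<notin> R'" using hR by auto
      thus "?phi u = ?psi u" unfolding psiR_def aR_def rg_phi_def by simp
    next
      fix y assume y: "y \<in> ?D - ?e" "?Q y"
      define z where "z = (if y \<in> R' then y else ?a y)"
      have z: "z \<in> ?D - ?e" using y alp_in[OF w(1)] alp_notR[OF w(1) cle] unfolding z_def by auto
      have az: "?a z \<in> ?D - ?e" using z alp_in[OF w(1)] alp_notR[OF w(1) cle] by auto
      have "psiR ?Gc R' y = rsig ?Gc z"
        using y unfolding psiR_def aR_def z_def by (simp add: con_simps)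
      also have "\<dots> = skip ?phi ?e (?a z)"
        using z az unfolding con_simps by (simp add: rg_phi_def[of "rg_del_edges _ _"])
      also have "\<dots> = skip ?psi ?e y"
      proof (rule skip_shift[symmetric])
        show "?psi y = ?phi (?a z)"
          using y alp_alp[OF w(1), of z] unfolding psiR_def aR_def z_def rg_phi_def by auto
        show "?psi u = ?phi u" if "u \<in> ?e" for u
          using that hR unfolding psiR_def aR_def rg_phi_def by auto
        show "\<exists>k>0. (?phi ^^ k) (?a z) \<notin> ?e"
          using skip_ex[OF phi_permutes[OF w(1)] wp(1), of "?a z" ?e] az by simp
      qed
      finally show "psiR ?Gc R' y = skip ?psi ?e y" .
    qed
    have split: "card {t \<in> ?I \<union> tk. ?Q t} = card {t \<in> ?I. ?Q t} + card {t \<in> tk. ?Q t}"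
    proof (rule card_split_tok)
      have tkD: "tk \<subseteq> ?D" using tok_subR[of ?D ?phi ?e] eD unfolding tk_def by blast
      show "finite ?I" by (rule wp(2))
      show "finite tk" unfolding tk_def by (rule tok_finite[OF wp(1)])
      show "?I \<inter> tk = {}" using wp(3) tkD by blast
    qed
    have "fc (?r ` K) = card {orb (psiR ?Gc R') y | y. y \<in> ?D - ?e \<and> ?Q y} + card {t \<in> ?I \<union> tk. ?Q t}"
      unfolding fc_def plvc rIc by (simp add: con_simps)
    also have "\<dots> = card {orb ?psi y | y. y \<in> ?D \<and> ?Q y} + card {t \<in> ?I. ?Q t}"
      unfolding split using cnt by simp
    finally show "fc (?r ` K) = card {orb ?psi y | y. y \<in> ?D \<and> ?Q y} + card {t \<in> ?I. ?Q t}" .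
  qed
  have fin: "EV N ns (?D - R' - ?e) ?a (mrg ?lv h ?h') (mrgw ?lv (pwv P) h ?h') (?r ` blocksV P) fc =
    EV N ns (rD ?Gc - R') (ralp ?Gc) (plv Pc) (pwv Pc) (blocksV Pc) fc"
  proof -
    have X: "rD ?Gc - R' = ?D - R' - ?e" by (auto simp: con_simps)
    have b: "blocksV Pc = ?r ` blocksV P" unfolding Pc_def by (rule blocks_con[OF P h])
    have pl: "plv Pc = mrg ?lv h ?h'" "pwv Pc = mrgw ?lv (pwv P) h ?h'" unfolding Pc_def by simp_all
    show ?thesis unfolding X b pl
      by (rule EV_cong) (auto simp: con_simps)
  qed
  have r2: "q1 N ns (Pc\<lparr>prg := rg_del_edges (prg Pc) R'\<rparr>) =
    EV N ns (rD ?Gc - R') (ralp ?Gc) (plv Pc) (pwv Pc) (blocksV Pc) fc"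
    using rhs unfolding fc_def .
  show ?thesis
    unfolding Pc_def[symmetric] lhs step fin r2 mu_def ..
qed

section \<open>Deletion-contraction for q\<close>

lemma qG_dc:
  assumes P: "wf_pkg P" and h: "h \<in> rD (prg P)" and N: "N \<noteq> 0"
  shows "qG N ns P = N powi (2 - int (mu P h)) * qG N ns (pcontract P h) - qG N ns (pdelete P h)"
proof -
  let ?G = "prg P" let ?a = "ralp ?G" let ?e = "{h, ?a h}"
  define E where "E = rg_edges ?G"
  define E' where "E' = E - {?e}"
  note w = wf_pkg_parts[OF P]
  note wp = wf_parts[OF w(1)]
  have eE: "?e \<in> E" unfolding E_def rg_edges_def using h by auto
  have finE: "finite E" unfolding E_def rg_edges_def setcompr_img by (rule finite_imageI[OF wp(1)])
  have finE': "finite E'" unfolding E'_def using finE by simp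
  have EE: "E = insert ?e E'" "?e \<notin> E'" unfolding E'_def using eE by auto
  have ed: "rg_edges (rg_del_edges ?G ?e) = E'" unfolding E'_def E_def by (rule edges_del_edge[OF w(1) h])
  have ec: "rg_edges (rg_con_edges ?G ?e) = E'" unfolding E'_def E_def by (rule edges_con_edge[OF w(1) h])
  have wd: "wf_rg (rg_del_edges ?G ?e)" by (rule wf_del[OF w(1) edge_closed[OF w(1) h]])
  have wc: "wf_rg (rg_con_edges ?G ?e)" by (rule wf_con[OF w(1) edge_closed[OF w(1) h]])
  define t where "t = (\<lambda>A. (-1::real) ^ card (E - A) * q1 N ns (P\<lparr>prg := rg_del_edges ?G (\<Union>(E - A))\<rparr>))"
  have qP: "qG N ns P = (\<Sum>A\<in>Pow E. t A)" unfolding qG_def t_def E_def ..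
  have split: "(\<Sum>A\<in>Pow E. t A) = (\<Sum>B\<in>Pow E'. t B) + (\<Sum>B\<in>Pow E'. t (insert ?e B))"
  proof -
    have pw: "Pow E = Pow E' \<union> insert ?e ` Pow E'" unfolding EE(1) by (rule Pow_insert)
    have dj: "Pow E' \<inter> insert ?e ` Pow E' = {}"
    proof (rule equals0I)
      fix X assume X: "X \<in> Pow E' \<inter> insert ?e ` Pow E'"
      hence "?e \<in> X" by auto
      moreover have "X \<subseteq> E'" using X by auto
      ultimately show False using EE(2) by auto
    qed
    have ij: "inj_on (insert ?e) (Pow E')"
    proof (rule inj_onI)
      fix X Y assume X: "X \<in> Pow E'" and Y: "Y \<in> Pow E'" and eq: "insert ?e X = insert ?e Y"
      have nx: "?e \<notin> X" using X EE(2) by blast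
      have ny: "?e \<notin> Y" using Y EE(2) by blast
      have "X = insert ?e X - {?e}" using nx by simp
      also have "\<dots> = insert ?e Y - {?e}" using eq by simp
      also have "\<dots> = Y" using ny by simp
      finally show "X = Y" .
    qed
    have f1: "finite (Pow E')" using finE' by simp
    have f2: "finite (insert ?e ` Pow E')" using f1 by simp
    have "(\<Sum>A\<in>Pow E. t A) = (\<Sum>A\<in>Pow E'. t A) + (\<Sum>A\<in>insert ?e ` Pow E'. t A)"
      unfolding pw by (rule sum.union_disjoint[OF f1 f2 dj])
    also have "(\<Sum>A\<in>insert ?e ` Pow E'. t A) = (\<Sum>B\<in>Pow E'. t (insert ?e B))"
      using sum.reindex[OF ij, of t] by simp
    finally show ?thesis .
  qed
  have del: "(\<Sum>B\<in>Pow E'. t B) = - qG N ns (pdelete P h)"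
  proof -
    have "qG N ns (pdelete P h) = (\<Sum>B\<in>Pow E'. (-1) ^ card (E' - B) *
        q1 N ns ((pdelete P h)\<lparr>prg := rg_del_edges (prg (pdelete P h)) (\<Union>(E' - B))\<rparr>))"
      unfolding qG_def by (simp only: pdelete_simps ed)
    also have "\<dots> = (\<Sum>B\<in>Pow E'. - t B)"
    proof (rule sum.cong[OF refl])
      fix B assume B: "B \<in> Pow E'"
      have EB: "E - B = insert ?e (E' - B)" "?e \<notin> E' - B" using B EE by auto
      have cB: "card (E - B) = Suc (card (E' - B))" unfolding EB(1) using EB(2) finE' by simp
      have UB: "\<Union>(E - B) = ?e \<union> \<Union>(E' - B)" unfolding EB(1) by simp
      have clB: "closedR (rg_del_edges ?G ?e) (\<Union>(E' - B))"
        by (rule edges_closed[OF wd]) (use ed in auto)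
      show "(-1) ^ card (E' - B) * q1 N ns ((pdelete P h)\<lparr>prg := rg_del_edges (prg (pdelete P h)) (\<Union>(E' - B))\<rparr>) = - t B"
        unfolding t_def cB UB q1_delete_step[OF P h clB] by simp
    qed
    finally show ?thesis by (simp add: sum_negf)
  qed
  have con: "(\<Sum>B\<in>Pow E'. t (insert ?e B)) = N powi (2 - int (mu P h)) * qG N ns (pcontract P h)"
  proof -
    have "qG N ns (pcontract P h) = (\<Sum>B\<in>Pow E'. (-1) ^ card (E' - B) *
        q1 N ns ((pcontract P h)\<lparr>prg := rg_del_edges (prg (pcontract P h)) (\<Union>(E' - B))\<rparr>))"
      unfolding qG_def by (simp only: pcontract_simps ec)
    hence "N powi (2 - int (mu P h)) * qG N ns (pcontract P h) = (\<Sum>B\<in>Pow E'. (-1) ^ card (E' - B) *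
        (N powi (2 - int (mu P h)) * q1 N ns ((pcontract P h)\<lparr>prg := rg_del_edges (prg (pcontract P h)) (\<Union>(E' - B))\<rparr>)))"
      by (simp add: sum_distrib_left algebra_simps)
    also have "\<dots> = (\<Sum>B\<in>Pow E'. t (insert ?e B))"
    proof (rule sum.cong[OF refl])
      fix B assume B: "B \<in> Pow E'"
      have EB: "E - insert ?e B = E' - B" using B EE by auto
      have clB: "closedR (rg_con_edges ?G ?e) (\<Union>(E' - B))"
        by (rule edges_closed[OF wc]) (use ec in auto)
      show "(-1) ^ card (E' - B) * (N powi (2 - int (mu P h)) *
          q1 N ns ((pcontract P h)\<lparr>prg := rg_del_edges (prg (pcontract P h)) (\<Union>(E' - B))\<rparr>)) = t (insert ?e B)"
        unfolding t_def EB q1_contract_step[OF P h N clB] ..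
    qed
    finally show ?thesis by simp
  qed
  show ?thesis unfolding qP split del con by simp
qed

lemma qG_empty:
  assumes P: "wf_pkg P" and e: "rD (prg P) = {}"
  shows "qG N ns P = (\<Prod>b\<in>blocksV P. N powi (-1) *
            sum_list (map (\<lambda>n. real n powi (1 + int (bsizeV P b) - int (pwv P b))) ns))"
proof -
  let ?G = "prg P" let ?lv = "plv P"
  note w = wf_pkg_parts[OF P]
  have E: "rg_edges ?G = {}" unfolding rg_edges_def using e by simp
  have cl: "closedR ?G {}" by (simp add: closedR_def)
  have "qG N ns P = q1 N ns (P\<lparr>prg := rg_del_edges ?G {}\<rparr>)" unfolding qG_def E by simp
  also have "\<dots> = EV N ns {} (ralp ?G) ?lv (pwv P) (blocksV P) (\<lambda>K. card {t \<in> rI ?G. ?lv t \<in> K})"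
    using q1_del[OF P cl] e by simp
  also have "\<dots> = (\<Prod>b\<in>blocksV P. EVt N ns 0 1 (card {t \<in> rI ?G. ?lv t = b}) (pwv P b))"
  proof -
    have l: "linkX {} (ralp ?G) ?lv = {}" unfolding linkX_def by simp
    have c: "compsX {} (ralp ?G) ?lv (blocksV P) = (\<lambda>b. {b}) ` blocksV P"
      unfolding compsX_def l by auto
    have ecn: "ecnt {} (ralp ?G) ?lv K = 0" for K unfolding ecnt_def by simp
    show ?thesis unfolding EV_def c ecn
      by (subst prod.reindex) (auto simp: inj_on_def)
  qed
  also have "\<dots> = (\<Prod>b\<in>blocksV P. N powi (-1) *
            sum_list (map (\<lambda>n. real n powi (1 + int (bsizeV P b) - int (pwv P b))) ns))"
  proof (rule prod.cong[OF refl])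
    fix b assume "b \<in> blocksV P"
    have vs: "rg_verts ?G = (\<lambda>t. {t}) ` rI ?G" unfolding rg_verts_def e by auto
    have "{v \<in> rg_verts ?G. \<exists>x\<in>v. ?lv x = b} = (\<lambda>t. {t}) ` {t \<in> rI ?G. ?lv t = b}"
      unfolding vs by auto
    hence bs: "bsizeV P b = card {t \<in> rI ?G. ?lv t = b}"
      unfolding bsizeV_def by (simp add: card_image inj_on_def)
    show "EVt N ns 0 1 (card {t \<in> rI ?G. ?lv t = b}) (pwv P b) =
        N powi (-1) * sum_list (map (\<lambda>n. real n powi (1 + int (bsizeV P b) - int (pwv P b))) ns)"
      unfolding EVt_def bs by (simp add: algebra_simps)
  qed
  finally show ?thesis .
qed

section \<open>Duality\<close>

lemma p1_q1: "p1 N ns Q = q1 N ns (pdual Q)"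
proof -
  have l: "linkV (pdual Q) = linkF Q" unfolding linkV_def linkF_def by simp
  have b: "blocksV (pdual Q) = blocksF Q" unfolding blocksV_def blocksF_def by simp
  have c: "compsV (pdual Q) = compsF Q" unfolding compsV_def compsF_def l b ..
  have t: "q1conn N ns (subV (pdual Q) H) = p1conn N ns (subF Q H)" for H
    unfolding q1conn_def p1conn_def subV_def subF_def nv_def nf_def ne_def totV_def totF_def
      blocksV_def blocksF_def
    by (simp add: verts_dual)
  show ?thesis unfolding p1_def q1_def c t ..
qed

lemma pdual_upd: "pdual (P\<lparr>prg := X\<rparr>) = (pdual P)\<lparr>prg := rg_dual X\<rparr>"
  by (simp add: pdual_def)

lemma pG_qG:
  assumes P: "wf_pkg P"
  shows "pG N ns P = qG N ns (pdual P)"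
proof -
  let ?G = "prg P"
  note w = wf_pkg_parts[OF P]
  show ?thesis
    unfolding pG_def qG_def pdual_simps edges_dual
  proof (rule sum.cong[OF refl])
    fix A assume A: "A \<in> Pow (rg_edges ?G)"
    have cl: "closedR (rg_dual ?G) (\<Union>(rg_edges ?G - A))"
      using edges_closed[OF w(1), of "rg_edges ?G - A"] by simp
    have "rg_dual (rg_con_edges ?G (\<Union>(rg_edges ?G - A))) = rg_del_edges (rg_dual ?G) (\<Union>(rg_edges ?G - A))"
      unfolding rg_con_edges_def by (rule dual_dual[OF wf_del[OF wf_dual[OF w(1)] cl]])
    thus "(-1) ^ card (rg_edges ?G - A) * p1 N ns (P\<lparr>prg := rg_con_edges ?G (\<Union>(rg_edges ?G - A))\<rparr>) =
        (-1) ^ card (rg_edges ?G - A) * q1 N ns ((pdual P)\<lparr>prg := rg_del_edges (rg_dual ?G) (\<Union>(rg_edges ?G - A))\<rparr>)"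
      unfolding p1_q1 pdual_upd by simp
  qed
qed

theorem theorem5p6:
  fixes Gam :: "'g monoid" and ns :: "nat list" and P :: "('d, 'b, 'c) pkg"
  assumes "group Gam" and "finite (carrier Gam)" and "irrep_dims Gam ns" and "wf_pkg P"
  shows
   "(\<forall>h\<in>rD (prg P).
       qG (real (card (carrier Gam))) ns P =
         real (card (carrier Gam)) powi (2 - int (mu P h)) * qG (real (card (carrier Gam))) ns (pcontract P h)
         - qG (real (card (carrier Gam))) ns (pdelete P h)) \<and>
    (rD (prg P) = {} \<longrightarrow>
       qG (real (card (carrier Gam))) ns P =
         (\<Prod>b\<in>blocksV P. real (card (carrier Gam)) powi (-1) *
            sum_list (map (\<lambda>n. real n powi (1 + int (bsizeV P b) - int (pwv P b))) ns))) \<and>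
    (\<forall>h\<in>rD (prg P).
       pG (real (card (carrier Gam))) ns P =
         real (card (carrier Gam)) powi (2 - int (eta P h)) * pG (real (card (carrier Gam))) ns (pdelete P h)
         - pG (real (card (carrier Gam))) ns (pcontract P h)) \<and>
    (rD (prg P) = {} \<longrightarrow>
       pG (real (card (carrier Gam))) ns P =
         (\<Prod>b\<in>blocksF P. real (card (carrier Gam)) powi (-1) *
            sum_list (map (\<lambda>n. real n powi (1 + int (bsizeF P b) - int (pwf P b))) ns)))"
proof -
  define N where "N = real (card (carrier Gam))"
  have one: "\<one>\<^bsub>Gam\<^esub> \<in> carrier Gam"
    using assms(1) by (simp add: group.is_monoid monoid.one_closed)
  have Npos: "N \<noteq> 0" unfolding N_def using one assms(2) by (auto simp: card_gt_0_iff)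
  note P = assms(4)
  note w = wf_pkg_parts[OF P]
  have PD: "wf_pkg (pdual P)" by (rule wf_pkg_dual[OF P])
  have part1: "\<forall>h\<in>rD (prg P). qG N ns P =
      N powi (2 - int (mu P h)) * qG N ns (pcontract P h) - qG N ns (pdelete P h)"
    using qG_dc[OF P _ Npos] by blast
  have part2: "rD (prg P) = {} \<longrightarrow> qG N ns P = (\<Prod>b\<in>blocksV P. N powi (-1) *
            sum_list (map (\<lambda>n. real n powi (1 + int (bsizeV P b) - int (pwv P b))) ns))"
    using qG_empty[OF P] by blast
  have part3: "\<forall>h\<in>rD (prg P). pG N ns P =
      N powi (2 - int (eta P h)) * pG N ns (pdelete P h) - pG N ns (pcontract P h)"
  proof
    fix h assume h: "h \<in> rD (prg P)"
    have hd: "h \<in> rD (prg (pdual P))" using h by simp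
    have e: "eta P h = mu (pdual P) h" unfolding eta_def mu_def by simp
    have c: "pcontract (pdual P) h = pdual (pdelete P h)"
      unfolding pcontract_def pdual_pdual[OF w(1)] ..
    have Pdel: "wf_pkg (pdelete P h)" by (rule wf_pkg_delete[OF P h])
    have Pcon: "wf_pkg (pcontract P h)" by (rule wf_pkg_contract[OF P h])
    have Pdd: "wf_pkg (pdelete (pdual P) h)" by (rule wf_pkg_delete[OF PD hd])
    have d: "pG N ns (pcontract P h) = qG N ns (pdelete (pdual P) h)"
      unfolding pG_qG[OF Pcon] unfolding pcontract_def
      using pdual_pdual[OF wf_pkg_parts(1)[OF Pdd]] by simp
    show "pG N ns P = N powi (2 - int (eta P h)) * pG N ns (pdelete P h) - pG N ns (pcontract P h)"
      unfolding pG_qG[OF P] pG_qG[OF Pdel] d e c[symmetric] by (rule qG_dc[OF PD hd Npos])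
  qed
  have part4: "rD (prg P) = {} \<longrightarrow> pG N ns P = (\<Prod>b\<in>blocksF P. N powi (-1) *
            sum_list (map (\<lambda>n. real n powi (1 + int (bsizeF P b) - int (pwf P b))) ns))"
  proof
    assume e: "rD (prg P) = {}"
    have b: "blocksV (pdual P) = blocksF P" unfolding blocksV_def blocksF_def by simp
    have s: "bsizeV (pdual P) b = bsizeF P b" for b unfolding bsizeV_def bsizeF_def by (simp add: verts_dual)
    show "pG N ns P = (\<Prod>b\<in>blocksF P. N powi (-1) *
            sum_list (map (\<lambda>n. real n powi (1 + int (bsizeF P b) - int (pwf P b))) ns))"
      unfolding pG_qG[OF P] using qG_empty[OF PD] e unfolding b s by simp
  qed
  show ?thesis using part1 part2 part3 part4 unfolding N_def by blast
qed

end
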